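(* Let $\vartheta$ be a primitive semi-compatible random substitution on $\mathcal A=\{a_1,\dots,a_n\}$ with topological entropy $s$ and lower/upper inflation word entropies $\underline s_i^I$, $\overline s_i^I$. Then for all $1\leqslant i\leqslant n$ and all $m\in\mathbb N$, \[ \frac{1}{\lambda^m}\bm q_m^\intercal\bm R\;\leqslant\;\underline s_i^I\;\leqslant\;\overline s_i^I\;\leqslant\;s\;\leqslant\;\frac{1}{\lambda^m-1}\bm q_m^\intercal\bm R . \] In particular the limit $s^I=\lim_{m\to\infty}\frac{1}{\ell_{m,i}}\log(\#\vartheta^m(a_i))$ exists, is independent of $i$, and \[ s=s^I=\lim_{m\to\infty}\frac{1}{\lambda^m}\bm q_m^\intercal\bm R=\sup_{m\in\mathbb N}\frac{1}{\lambda^m}\bm q_m^\intercal\bm R . \]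
   Context: Let $\mathcal A=\{a_1,\dots,a_n\}$ be a finite alphabet, $\mathcal A^+$ the finite non-empty words over $\mathcal A$. A random substitution is a map $\vartheta$ from $\mathcal A$ to finite non-empty subsets of $\mathcal A^+$, extended to words by $\vartheta(u_1\cdots u_m)=\{w_1\cdots w_m: w_k\in\vartheta(u_k)\}$ and to sets of words by unions; powers $\vartheta^m$ are compositions. $|u|_a$ is the number of occurrences of letter $a$ in $u$; $\Phi(u)=(|u|_{a_1},\dots,|u|_{a_n})^\intercal$. $\vartheta$ is semi-compatible if for each $a$ all words in $\vartheta(a)$ have the same $\Phi$; then all words in $\vartheta^m(a_i)$ have a common length $\ell_{m,i}$. Substitution matrix $M_{ij}=|u|_{a_i}$, $u\in\vartheta(a_j)$; primitive means $M$ primitive, with Perron–Frobenius eigenvalue $\lambda$ and right PF eigenvector $\bm R$, $\|\bm R\|_1=1$. $q_{m,i}=\log\#\vartheta^m(a_i)$, $\bm q_m=(q_{m,1},\dots,q_{m,n})^\intercal$. $\underline s_i^I=\liminf_{m\to\infty}q_{m,i}/\ell_{m,i}$, $\overline s_i^I=\limsup_{m\to\infty}q_{m,i}/\ell_{m,i}$. The language $\mathcal L$ is the set of all subwords of words in $\vartheta^m(a)$, $a\in\mathcal A$, $m\in\mathbb N$; $\mathcal L_\ell$ its words of length $\ell$; topological entropy $s=\lim_{\ell\to\infty}\frac1\ell\log\#\mathcal L_\ell$. *)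

theory Defs
  imports "HOL-Analysis.Analysis" "HOL-Library.Liminf_Limsup"
begin

definition random_subst :: "('a \<Rightarrow> 'a list set) \<Rightarrow> bool" where
  "random_subst \<theta> \<longleftrightarrow> (\<forall>a. finite (\<theta> a) \<and> \<theta> a \<noteq> {} \<and> [] \<notin> \<theta> a)"

fun subst_word :: "('a \<Rightarrow> 'a list set) \<Rightarrow> 'a list \<Rightarrow> 'a list set" where
  "subst_word \<theta> [] = {[]}"
| "subst_word \<theta> (x # xs) = {v @ w | v w. v \<in> \<theta> x \<and> w \<in> subst_word \<theta> xs}"

definition subst_set :: "('a \<Rightarrow> 'a list set) \<Rightarrow> 'a list set \<Rightarrow> 'a list set" where
  "subst_set \<theta> U = (\<Union>u\<in>U. subst_word \<theta> u)"

definition subst_pow :: "('a \<Rightarrow> 'a list set) \<Rightarrow> nat \<Rightarrow> 'a \<Rightarrow> 'a list set" where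
  "subst_pow \<theta> m a = (subst_set \<theta> ^^ m) {[a]}"

definition semi_compatible :: "('a \<Rightarrow> 'a list set) \<Rightarrow> bool" where
  "semi_compatible \<theta> \<longleftrightarrow>
     (\<forall>a u v. u \<in> \<theta> a \<longrightarrow> v \<in> \<theta> a \<longrightarrow> (\<forall>b. count_list u b = count_list v b))"

definition subst_matrix :: "('a \<Rightarrow> 'a list set) \<Rightarrow> 'a \<Rightarrow> 'a \<Rightarrow> real" where
  "subst_matrix \<theta> i j = real (count_list (SOME u. u \<in> \<theta> j) i)"

definition mat_mult :: "('a::finite \<Rightarrow> 'a \<Rightarrow> real) \<Rightarrow> ('a \<Rightarrow> 'a \<Rightarrow> real) \<Rightarrow> 'a \<Rightarrow> 'a \<Rightarrow> real" where
  "mat_mult A B i j = (\<Sum>k\<in>UNIV. A i k * B k j)"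

fun mat_pow :: "('a::finite \<Rightarrow> 'a \<Rightarrow> real) \<Rightarrow> nat \<Rightarrow> 'a \<Rightarrow> 'a \<Rightarrow> real" where
  "mat_pow A 0 = (\<lambda>i j. if i = j then 1 else 0)"
| "mat_pow A (Suc k) = mat_mult A (mat_pow A k)"

definition primitive_mat :: "('a::finite \<Rightarrow> 'a \<Rightarrow> real) \<Rightarrow> bool" where
  "primitive_mat A \<longleftrightarrow> (\<forall>i j. A i j \<ge> 0) \<and> (\<exists>k>0. \<forall>i j. mat_pow A k i j > 0)"

definition primitive_subst :: "('a::finite \<Rightarrow> 'a list set) \<Rightarrow> bool" where
  "primitive_subst \<theta> \<longleftrightarrow> primitive_mat (subst_matrix \<theta>)"

definition mat_eigenvalues :: "('a::finite \<Rightarrow> 'a \<Rightarrow> real) \<Rightarrow> complex set" where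
  "mat_eigenvalues A = {z. \<exists>v::'a \<Rightarrow> complex. v \<noteq> (\<lambda>_. 0) \<and>
      (\<forall>i. (\<Sum>j\<in>UNIV. complex_of_real (A i j) * v j) = z * v i)}"

definition pf_eigenvalue :: "('a::finite \<Rightarrow> 'a \<Rightarrow> real) \<Rightarrow> real" where
  "pf_eigenvalue A = Sup (cmod ` mat_eigenvalues A)"

definition is_right_pf_vector :: "('a::finite \<Rightarrow> 'a \<Rightarrow> real) \<Rightarrow> ('a \<Rightarrow> real) \<Rightarrow> bool" where
  "is_right_pf_vector A R \<longleftrightarrow> (\<forall>i. R i \<ge> 0) \<and> (\<Sum>i\<in>UNIV. R i) = 1 \<and>
      (\<forall>i. (\<Sum>j\<in>UNIV. A i j * R j) = pf_eigenvalue A * R i)"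

text \<open>ell_{m,i}: common length of words in theta^m(a_i) (well defined by semi-compatibility).\<close>
definition ell :: "('a \<Rightarrow> 'a list set) \<Rightarrow> nat \<Rightarrow> 'a \<Rightarrow> nat" where
  "ell \<theta> m a = length (SOME w. w \<in> subst_pow \<theta> m a)"

definition qv :: "('a \<Rightarrow> 'a list set) \<Rightarrow> nat \<Rightarrow> 'a \<Rightarrow> real" where
  "qv \<theta> m a = ln (real (card (subst_pow \<theta> m a)))"

definition language :: "('a \<Rightarrow> 'a list set) \<Rightarrow> 'a list set" where
  "language \<theta> = {u. \<exists>m a w p s. w \<in> subst_pow \<theta> m a \<and> w = p @ u @ s}"

definition language_len :: "('a \<Rightarrow> 'a list set) \<Rightarrow> nat \<Rightarrow> 'a list set" where
  "language_len \<theta> l = {u \<in> language \<theta>. length u = l}"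

definition top_entropy :: "('a \<Rightarrow> 'a list set) \<Rightarrow> real" where
  "top_entropy \<theta> = lim (\<lambda>l. ln (real (card (language_len \<theta> l))) / real l)"

definition lower_infl_entropy :: "('a \<Rightarrow> 'a list set) \<Rightarrow> 'a \<Rightarrow> ereal" where
  "lower_infl_entropy \<theta> a = liminf (\<lambda>m. ereal (qv \<theta> m a / real (ell \<theta> m a)))"

definition upper_infl_entropy :: "('a \<Rightarrow> 'a list set) \<Rightarrow> 'a \<Rightarrow> ereal" where
  "upper_infl_entropy \<theta> a = limsup (\<lambda>m. ereal (qv \<theta> m a / real (ell \<theta> m a)))"

end

theory Submission
  imports Defs "HOL-Real_Asymp.Real_Asymp"
begin


lemma subst_word_Cons_iff:
  "z \<in> subst_word \<theta> (a # x) \<longleftrightarrow> (\<exists>v w. z = v @ w \<and> v \<in> \<theta> a \<and> w \<in> subst_word \<theta> x)"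
  by simp

declare subst_word.simps(2)[simp del]

lemma subst_word_append:
  "subst_word \<theta> (x @ y) = {v @ w | v w. v \<in> subst_word \<theta> x \<and> w \<in> subst_word \<theta> y}"
proof (induction x)
  case Nil then show ?case by simp
next
  case (Cons a x)
  show ?case
  proof (rule set_eqI, rule iffI)
    fix z assume "z \<in> subst_word \<theta> ((a # x) @ y)"
    then obtain v w where 1: "z = v @ w" "v \<in> \<theta> a" "w \<in> subst_word \<theta> (x @ y)"
      unfolding append_Cons subst_word_Cons_iff by blast
    from 1(3) Cons obtain w1 w2 where 2: "w = w1 @ w2" "w1 \<in> subst_word \<theta> x" "w2 \<in> subst_word \<theta> y"
      by blast
    have "v @ w1 \<in> subst_word \<theta> (a # x)" unfolding subst_word_Cons_iff using 1 2 by blast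
    moreover have "z = (v @ w1) @ w2" using 1 2 by simp
    ultimately show "z \<in> {v @ w |v w. v \<in> subst_word \<theta> (a # x) \<and> w \<in> subst_word \<theta> y}"
      using 2 by blast
  next
    fix z assume "z \<in> {v @ w |v w. v \<in> subst_word \<theta> (a # x) \<and> w \<in> subst_word \<theta> y}"
    then obtain v w where 1: "z = v @ w" "v \<in> subst_word \<theta> (a # x)" "w \<in> subst_word \<theta> y" by blast
    then obtain v1 v2 where 2: "v = v1 @ v2" "v1 \<in> \<theta> a" "v2 \<in> subst_word \<theta> x"
      unfolding subst_word_Cons_iff by blast
    have "v2 @ w \<in> subst_word \<theta> (x @ y)" using Cons 1 2 by blast
    moreover have "z = v1 @ (v2 @ w)" using 1 2 by simp
    ultimately show "z \<in> subst_word \<theta> ((a # x) @ y)"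
      unfolding append_Cons subst_word_Cons_iff using 2 by blast
  qed
qed

definition P :: "('a \<Rightarrow> 'a list set) \<Rightarrow> nat \<Rightarrow> 'a list \<Rightarrow> 'a list set" where
  "P \<theta> n u = (subst_set \<theta> ^^ n) {u}"

lemma P_0[simp]: "P \<theta> 0 u = {u}" by (simp add: P_def)
lemma P_Suc: "P \<theta> (Suc n) u = subst_set \<theta> (P \<theta> n u)" by (simp add: P_def)

lemma subst_set_UN: "subst_set \<theta> (\<Union>x\<in>X. F x) = (\<Union>x\<in>X. subst_set \<theta> (F x))"
  unfolding subst_set_def by blast

lemma funpow_subst_set: "(subst_set \<theta> ^^ n) U = (\<Union>u\<in>U. P \<theta> n u)"
proof (induction n)
  case 0 then show ?case by simp
next
  case (Suc n)
  have "(subst_set \<theta> ^^ Suc n) U = subst_set \<theta> (\<Union>u\<in>U. P \<theta> n u)" using Suc by simp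
  also have "\<dots> = (\<Union>u\<in>U. P \<theta> (Suc n) u)" by (simp only: subst_set_UN P_Suc)
  finally show ?case .
qed

lemma P_add: "P \<theta> (n + k) u = (\<Union>v\<in>P \<theta> k u. P \<theta> n v)"
proof -
  have "P \<theta> (n + k) u = (subst_set \<theta> ^^ n) (P \<theta> k u)"
    by (simp add: P_def funpow_add)
  then show ?thesis by (simp only: funpow_subst_set)
qed

lemma P_Nil[simp]: "P \<theta> n [] = {[]}"
proof (induction n)
  case 0 show ?case by (rule P_0)
next
  case (Suc n)
  have T1: "subst_set \<theta> {[]} = {[]}" unfolding subst_set_def by simp
  have "P \<theta> (Suc n) [] = subst_set \<theta> (P \<theta> n [])" by (rule P_Suc)
  also have "\<dots> = subst_set \<theta> {[]}" using Suc.IH by (rule arg_cong)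
  also have "\<dots> = {[]}" by (rule T1)
  finally show ?case .
qed

lemma mem_P_Suc: "z \<in> P \<theta> (Suc n) u \<longleftrightarrow> (\<exists>v\<in>P \<theta> n u. z \<in> subst_word \<theta> v)"
  unfolding P_Suc subst_set_def by blast

lemma mem_app_set: "z \<in> {v @ w | v w. v \<in> A \<and> w \<in> B} \<longleftrightarrow> (\<exists>v w. z = v @ w \<and> v \<in> A \<and> w \<in> B)"
  by blast

lemma P_append: "P \<theta> n (x @ y) = {v @ w | v w. v \<in> P \<theta> n x \<and> w \<in> P \<theta> n y}"
proof (induction n arbitrary: x y)
  case 0 then show ?case by simp
next
  case (Suc n)
  show ?case
  proof (rule set_eqI, rule iffI)
    fix z assume "z \<in> P \<theta> (Suc n) (x @ y)"
    then obtain u where u: "u \<in> P \<theta> n (x @ y)" "z \<in> subst_word \<theta> u"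
      unfolding mem_P_Suc by blast
    from u(1) have "u \<in> {v @ w | v w. v \<in> P \<theta> n x \<and> w \<in> P \<theta> n y}" by (simp only: Suc.IH)
    then obtain u1 u2 where 1: "u = u1 @ u2" "u1 \<in> P \<theta> n x" "u2 \<in> P \<theta> n y"
      unfolding mem_app_set by blast
    from u(2) have "z \<in> {v @ w | v w. v \<in> subst_word \<theta> u1 \<and> w \<in> subst_word \<theta> u2}"
      unfolding 1(1) subst_word_append .
    then obtain z1 z2 where 2: "z = z1 @ z2" "z1 \<in> subst_word \<theta> u1" "z2 \<in> subst_word \<theta> u2"
      unfolding mem_app_set by blast
    have "z1 \<in> P \<theta> (Suc n) x" unfolding mem_P_Suc using 1(2) 2(2) by blast
    moreover have "z2 \<in> P \<theta> (Suc n) y" unfolding mem_P_Suc using 1(3) 2(3) by blast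
    ultimately show "z \<in> {v @ w |v w. v \<in> P \<theta> (Suc n) x \<and> w \<in> P \<theta> (Suc n) y}"
      unfolding mem_app_set using 2(1) by blast
  next
    fix z assume "z \<in> {v @ w |v w. v \<in> P \<theta> (Suc n) x \<and> w \<in> P \<theta> (Suc n) y}"
    then obtain z1 z2 where 1: "z = z1 @ z2" "z1 \<in> P \<theta> (Suc n) x" "z2 \<in> P \<theta> (Suc n) y"
      unfolding mem_app_set by blast
    from 1(2) obtain u1 where 2: "u1 \<in> P \<theta> n x" "z1 \<in> subst_word \<theta> u1"
      unfolding mem_P_Suc by blast
    from 1(3) obtain u2 where 3: "u2 \<in> P \<theta> n y" "z2 \<in> subst_word \<theta> u2"
      unfolding mem_P_Suc by blast
    have "u1 @ u2 \<in> {v @ w | v w. v \<in> P \<theta> n x \<and> w \<in> P \<theta> n y}"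
      unfolding mem_app_set using 2 3 by blast
    then have "u1 @ u2 \<in> P \<theta> n (x @ y)" by (simp only: Suc.IH)
    moreover have "z \<in> {v @ w | v w. v \<in> subst_word \<theta> u1 \<and> w \<in> subst_word \<theta> u2}"
      unfolding mem_app_set using 1(1) 2 3 by blast
    then have "z \<in> subst_word \<theta> (u1 @ u2)" unfolding subst_word_append .
    ultimately show "z \<in> P \<theta> (Suc n) (x @ y)"
      unfolding mem_P_Suc by blast
  qed
qed

lemma P_Cons: "P \<theta> n (c # u) = {v @ w | v w. v \<in> P \<theta> n [c] \<and> w \<in> P \<theta> n u}"
  using P_append[of \<theta> n "[c]" u] by simp

lemma subst_pow_P: "subst_pow \<theta> m a = P \<theta> m [a]"
  by (simp add: subst_pow_def P_def)

lemma P_single_Suc: "P \<theta> (Suc n) [a] = (\<Union>v\<in>P \<theta> n [a]. subst_word \<theta> v)"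
  unfolding P_Suc subst_set_def ..


lemma subst_word_Cons_image: "subst_word \<theta> (x # xs) = (\<lambda>(v, w). v @ w) ` (\<theta> x \<times> subst_word \<theta> xs)"
proof (rule set_eqI)
  fix z
  show "z \<in> subst_word \<theta> (x # xs) \<longleftrightarrow> z \<in> (\<lambda>(v, w). v @ w) ` (\<theta> x \<times> subst_word \<theta> xs)"
    unfolding subst_word_Cons_iff image_iff Bex_def by auto
qed

lemma sum_list_map_count:
  fixes f :: "'a::finite \<Rightarrow> 'b::comm_semiring_1"
  shows "sum_list (map f u) = (\<Sum>c\<in>UNIV. of_nat (count_list u c) * f c)"
proof (induction u)
  case Nil then show ?case by simp
next
  case (Cons x u)
  have "(\<Sum>c\<in>UNIV. of_nat (count_list (x # u) c) * f c)
      = (\<Sum>c\<in>UNIV. (if x = c then f c else 0) + of_nat (count_list u c) * f c)"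
    by (rule sum.cong) (auto simp: algebra_simps)
  also have "\<dots> = f x + (\<Sum>c\<in>UNIV. of_nat (count_list u c) * f c)"
    by (simp add: sum.distrib)
  finally show ?case using Cons by simp
qed

lemma length_count: "length (xs :: 'a::finite list) = (\<Sum>c\<in>UNIV. count_list xs c)"
  using sum_count_set[of xs UNIV] by simp

lemma card_app_set:
  assumes "finite A" "finite B" "\<forall>v\<in>A. length v = k"
  shows "card {v @ w | v w. v \<in> A \<and> w \<in> B} = card A * card B"
proof -
  have eq: "{v @ w | v w. v \<in> A \<and> w \<in> B} = (\<lambda>(v, w). v @ w) ` (A \<times> B)" by auto
  have "inj_on (\<lambda>(v, w). v @ w) (A \<times> B)"
    using assms(3) by (auto simp: inj_on_def append_eq_append_conv)
  then show ?thesis unfolding eq by (simp add: card_image card_cartesian_product)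
qed

locale RS =
  fixes \<theta> :: "'a::finite \<Rightarrow> 'a list set"
  assumes rs: "random_subst \<theta>" and sc: "semi_compatible \<theta>"
begin

abbreviation "M \<equiv> subst_matrix \<theta>"

lemma th_fin: "finite (\<theta> a)" and th_ne: "\<theta> a \<noteq> {}" and th_nonnil: "[] \<notin> \<theta> a"
  using rs by (auto simp: random_subst_def)

lemma sw_finite: "finite (subst_word \<theta> u)"
  by (induction u) (simp_all add: subst_word_Cons_image th_fin)

lemma sw_ne: "subst_word \<theta> u \<noteq> {}"
  by (induction u) (simp_all add: subst_word_Cons_image th_ne)

lemma P_finite: "finite (P \<theta> n u)"
  by (induction n) (simp_all add: P_Suc subst_set_def sw_finite)

lemma P_ne: "P \<theta> n u \<noteq> {}"
  by (induction n) (simp_all add: P_Suc subst_set_def sw_ne)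

lemma sw_length: "w \<in> subst_word \<theta> u \<Longrightarrow> length u \<le> length w"
proof (induction u arbitrary: w)
  case (Cons x u)
  then obtain v w' where "w = v @ w'" "v \<in> \<theta> x" "w' \<in> subst_word \<theta> u"
    unfolding subst_word_Cons_iff by blast
  moreover have "v \<noteq> []" using th_nonnil \<open>v \<in> \<theta> x\<close> by blast
  ultimately show ?case using Cons.IH[of w'] by (cases v) auto
qed simp

lemma count_theta: "u \<in> \<theta> a \<Longrightarrow> real (count_list u b) = M b a"
proof -
  assume u: "u \<in> \<theta> a"
  have "(SOME u. u \<in> \<theta> a) \<in> \<theta> a" using u by (rule someI)
  then show ?thesis using sc u unfolding semi_compatible_def subst_matrix_def by metis
qed

lemma M_nonneg: "M i j \<ge> 0" by (simp add: subst_matrix_def)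

lemma count_sw:
  "w \<in> subst_word \<theta> u \<Longrightarrow> real (count_list w b) = (\<Sum>c\<in>UNIV. M b c * real (count_list u c))"
proof (induction u arbitrary: w)
  case Nil then show ?case by simp
next
  case (Cons x u)
  then obtain v w' where 1: "w = v @ w'" "v \<in> \<theta> x" "w' \<in> subst_word \<theta> u"
    unfolding subst_word_Cons_iff by blast
  have "(\<Sum>c\<in>UNIV. M b c * real (count_list (x # u) c))
      = (\<Sum>c\<in>UNIV. (if x = c then M b c else 0) + M b c * real (count_list u c))"
    by (rule sum.cong) (auto simp: algebra_simps)
  also have "\<dots> = M b x + (\<Sum>c\<in>UNIV. M b c * real (count_list u c))"
    by (simp add: sum.distrib)
  finally show ?case using Cons.IH[OF 1(3)] count_theta[OF 1(2), of b] 1(1) by simp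
qed

lemma count_P:
  "w \<in> P \<theta> n [a] \<Longrightarrow> real (count_list w b) = mat_pow M n b a"
proof (induction n arbitrary: w b)
  case 0 then show ?case by simp
next
  case (Suc n)
  then obtain v where v: "v \<in> P \<theta> n [a]" "w \<in> subst_word \<theta> v" unfolding mem_P_Suc by blast
  have "real (count_list w b) = (\<Sum>c\<in>UNIV. M b c * real (count_list v c))" using count_sw[OF v(2)] .
  also have "\<dots> = (\<Sum>c\<in>UNIV. M b c * mat_pow M n c a)" using Suc.IH[OF v(1)] by simp
  finally show ?case by (simp add: mat_mult_def)
qed

definition Lm :: "nat \<Rightarrow> 'a \<Rightarrow> real" where "Lm n a = (\<Sum>b\<in>UNIV. mat_pow M n b a)"

lemma length_P: "w \<in> P \<theta> n [a] \<Longrightarrow> real (length w) = Lm n a"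
  unfolding Lm_def length_count by (simp add: count_P)

lemma ell_eq: "real (ell \<theta> n a) = Lm n a"
proof -
  obtain w where "w \<in> P \<theta> n [a]" using P_ne by blast
  then have "(SOME w. w \<in> P \<theta> n [a]) \<in> P \<theta> n [a]" by (rule someI)
  then show ?thesis unfolding ell_def subst_pow_P by (rule length_P)
qed

lemma length_P_ell: "w \<in> P \<theta> n [a] \<Longrightarrow> length w = ell \<theta> n a"
  using length_P ell_eq by (metis of_nat_eq_iff)

lemma length_P_word: "w \<in> P \<theta> n u \<Longrightarrow> length w = sum_list (map (ell \<theta> n) u)"
proof (induction u arbitrary: w)
  case Nil then show ?case by simp
next
  case (Cons c u)
  from Cons.prems obtain v w' where "w = v @ w'" "v \<in> P \<theta> n [c]" "w' \<in> P \<theta> n u"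
    unfolding P_Cons[of \<theta> n c u] mem_app_set by blast
  then show ?case using Cons.IH[of w'] length_P_ell[of v n c] by simp
qed

lemma card_P_word: "card (P \<theta> n u) = prod_list (map (\<lambda>c. card (P \<theta> n [c])) u)"
proof (induction u)
  case Nil then show ?case by simp
next
  case (Cons c u)
  have "card (P \<theta> n (c # u)) = card (P \<theta> n [c]) * card (P \<theta> n u)"
    unfolding P_Cons[of \<theta> n c u] by (rule card_app_set) (auto simp: P_finite length_P_ell)
  then show ?case using Cons by simp
qed

definition q :: "nat \<Rightarrow> 'a \<Rightarrow> real" where "q n a = qv \<theta> n a"

lemma q_eq: "q n a = ln (real (card (P \<theta> n [a])))"
  by (simp add: q_def qv_def subst_pow_P)

lemma card_P_pos: "card (P \<theta> n u) > 0"
  using P_finite P_ne by (simp add: card_gt_0_iff)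

lemma q_nonneg: "q n a \<ge> 0"
  using card_P_pos[of n "[a]"] by (simp add: q_eq)

lemma ln_card_P_word: "ln (real (card (P \<theta> n u))) = sum_list (map (q n) u)"
proof (induction u)
  case Nil then show ?case by simp
next
  case (Cons c u)
  have "card (P \<theta> n (c # u)) = card (P \<theta> n [c]) * card (P \<theta> n u)"
    unfolding P_Cons[of \<theta> n c u] by (rule card_app_set) (auto simp: P_finite length_P_ell)
  then have "ln (real (card (P \<theta> n (c # u)))) = ln (real (card (P \<theta> n [c])) * real (card (P \<theta> n u)))"
    by simp
  also have "\<dots> = q n c + ln (real (card (P \<theta> n u)))"
    using card_P_pos[of n "[c]"] card_P_pos[of n u] by (simp add: ln_mult q_eq)
  finally show ?case using Cons by simp
qed


lemma sum_ell_word: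
  assumes "u \<in> P \<theta> k [a]"
  shows "real (sum_list (map (ell \<theta> n) u)) = (\<Sum>c\<in>UNIV. mat_pow M k c a * Lm n c)"
proof -
  have "real (sum_list (map (ell \<theta> n) u)) = sum_list (map (\<lambda>c. real (ell \<theta> n c)) u)"
    by (induction u) simp_all
  also have "\<dots> = (\<Sum>c\<in>UNIV. real (count_list u c) * real (ell \<theta> n c))"
    by (rule sum_list_map_count)
  also have "\<dots> = (\<Sum>c\<in>UNIV. mat_pow M k c a * Lm n c)"
    using count_P[OF assms] by (simp add: ell_eq)
  finally show ?thesis .
qed

lemma sum_q_word:
  assumes "u \<in> P \<theta> k [a]"
  shows "sum_list (map (q n) u) = (\<Sum>c\<in>UNIV. mat_pow M k c a * q n c)"
proof -
  have "sum_list (map (q n) u) = (\<Sum>c\<in>UNIV. real (count_list u c) * q n c)"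
    by (rule sum_list_map_count)
  also have "\<dots> = (\<Sum>c\<in>UNIV. mat_pow M k c a * q n c)"
    using count_P[OF assms] by simp
  finally show ?thesis .
qed

lemma Lm_add: "Lm (n + k) a = (\<Sum>c\<in>UNIV. mat_pow M k c a * Lm n c)"
proof -
  obtain w where w: "w \<in> P \<theta> (n + k) [a]" using P_ne by blast
  then obtain u where u: "u \<in> P \<theta> k [a]" "w \<in> P \<theta> n u" unfolding P_add by blast
  have "Lm (n + k) a = real (length w)" using length_P[OF w] by simp
  also have "\<dots> = real (sum_list (map (ell \<theta> n) u))" using length_P_word[OF u(2)] by simp
  also have "\<dots> = (\<Sum>c\<in>UNIV. mat_pow M k c a * Lm n c)" by (rule sum_ell_word[OF u(1)])
  finally show ?thesis .
qed

lemma q_add_lower: "(\<Sum>c\<in>UNIV. mat_pow M k c a * q n c) \<le> q (n + k) a"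
proof -
  obtain u where u: "u \<in> P \<theta> k [a]" using P_ne by blast
  have sub: "P \<theta> n u \<subseteq> P \<theta> (n + k) [a]" unfolding P_add using u by blast
  have "card (P \<theta> n u) \<le> card (P \<theta> (n + k) [a])" by (rule card_mono[OF P_finite sub])
  then have "ln (real (card (P \<theta> n u))) \<le> ln (real (card (P \<theta> (n + k) [a])))"
    using card_P_pos[of n u] by simp
  then show ?thesis unfolding ln_card_P_word[of n u] q_eq[of "n+k" a, symmetric] sum_q_word[OF u] .
qed

lemma q_add_upper: "q (n + k) a \<le> q k a + (\<Sum>c\<in>UNIV. mat_pow M k c a * q n c)"
proof -
  define X where "X = (\<Sum>c\<in>UNIV. mat_pow M k c a * q n c)"
  have cu: "real (card (P \<theta> n u)) = exp X" if "u \<in> P \<theta> k [a]" for u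
  proof -
    have "ln (real (card (P \<theta> n u))) = X" unfolding ln_card_P_word[of n u] X_def sum_q_word[OF that] ..
    then show ?thesis using card_P_pos[of n u] by (metis exp_ln of_nat_0_less_iff)
  qed
  have "card (P \<theta> (n + k) [a]) \<le> (\<Sum>u\<in>P \<theta> k [a]. card (P \<theta> n u))"
    unfolding P_add by (rule card_UN_le[OF P_finite])
  then have "real (card (P \<theta> (n + k) [a])) \<le> (\<Sum>u\<in>P \<theta> k [a]. real (card (P \<theta> n u)))"
    by (metis of_nat_le_iff of_nat_sum)
  also have "\<dots> = real (card (P \<theta> k [a])) * exp X" using cu by simp
  finally have "ln (real (card (P \<theta> (n + k) [a]))) \<le> ln (real (card (P \<theta> k [a])) * exp X)"
    using card_P_pos[of "n+k" "[a]"] by simp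
  also have "\<dots> = q k a + X" using card_P_pos[of k "[a]"] by (simp add: ln_mult q_eq)
  finally show ?thesis unfolding q_eq[of "n+k" a] X_def .
qed

lemma P_length_mono: "w \<in> P \<theta> n u \<Longrightarrow> length u \<le> length w"
proof (induction n arbitrary: w)
  case 0 then show ?case by simp
next
  case (Suc n)
  then obtain v where "v \<in> P \<theta> n u" "w \<in> subst_word \<theta> v" unfolding mem_P_Suc by blast
  then show ?case using Suc.IH sw_length by (meson le_trans)
qed

lemma Lm_ge1: "Lm n a \<ge> 1"
proof -
  obtain w where w: "w \<in> P \<theta> n [a]" using P_ne by blast
  then have "1 \<le> length w" using P_length_mono[OF w] by simp
  then show ?thesis using length_P[OF w] by simp
qed

lemma Lm_mono: "n \<le> m \<Longrightarrow> Lm n a \<le> Lm m a"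
proof -
  assume "n \<le> m"
  then obtain k where m: "m = k + n" by (metis add.commute le_add_diff_inverse)
  obtain w where w: "w \<in> P \<theta> m [a]" using P_ne by blast
  then obtain v where v: "v \<in> P \<theta> n [a]" "w \<in> P \<theta> k v" unfolding m P_add by blast
  show ?thesis using length_P[OF w] length_P[OF v(1)] P_length_mono[OF v(2)] by simp
qed

lemma card_lists_eq: "card {xs :: 'a list. length xs = k} = CARD('a) ^ k"
  using card_lists_length_eq[of "UNIV :: 'a set" k] by simp

lemma q_le_Lm: "q n a \<le> Lm n a * ln (real CARD('a))"
proof -
  have sub: "P \<theta> n [a] \<subseteq> {xs. length xs = ell \<theta> n a}" using length_P_ell by blast
  have fin: "finite {xs :: 'a list. length xs = ell \<theta> n a}"
    using finite_lists_length_eq[of "UNIV :: 'a set"] by simp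
  have "card (P \<theta> n [a]) \<le> CARD('a) ^ ell \<theta> n a"
    using card_mono[OF fin sub] card_lists_eq by simp
  then have "real (card (P \<theta> n [a])) \<le> real CARD('a) ^ ell \<theta> n a"
    by (metis of_nat_le_iff of_nat_power)
  then have "ln (real (card (P \<theta> n [a]))) \<le> ln (real CARD('a) ^ ell \<theta> n a)"
    using card_P_pos[of n "[a]"] by simp
  also have "\<dots> = real (ell \<theta> n a) * ln (real CARD('a))"
    by (simp add: ln_realpow)
  finally show ?thesis by (simp add: q_eq ell_eq)
qed

lemma lnK_nonneg: "ln (real CARD('a)) \<ge> 0"
  by simp

lemma q_0: "q 0 a = 0" by (simp add: q_eq)
lemma Lm_0: "Lm 0 a = 1" by (simp add: Lm_def)

end


lemma stoch_avg_bounds: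
  fixes V :: "'a::finite \<Rightarrow> real" and z :: "'a \<Rightarrow> real"
  assumes nn: "\<And>l. V l \<ge> \<delta>" and d0: "\<delta> \<ge> 0" and s1: "(\<Sum>l\<in>UNIV. V l) = 1"
  shows "(\<Sum>l\<in>UNIV. V l * z l) \<le> Max (range z) - \<delta> * (Max (range z) - Min (range z))"
    and "(\<Sum>l\<in>UNIV. V l * z l) \<ge> Min (range z) + \<delta> * (Max (range z) - Min (range z))"
proof -
  let ?Mx = "Max (range z)" and ?Mn = "Min (range z)"
  have "?Mn \<in> range z" by (rule Min_in) auto
  then obtain l0 where l0: "z l0 = ?Mn" by (metis rangeE)
  have "?Mx \<in> range z" by (rule Max_in) auto
  then obtain l1 where l1: "z l1 = ?Mx" by (metis rangeE)
  have le: "z l \<le> ?Mx" "?Mn \<le> z l" for l by simp_all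
  have Vnn: "V l \<ge> 0" for l using nn[of l] d0 by linarith
  have "V l0 * (?Mx - z l0) \<le> (\<Sum>l\<in>UNIV. V l * (?Mx - z l))"
    by (rule member_le_sum) (auto intro!: mult_nonneg_nonneg Vnn simp: le)
  also have "\<dots> = ?Mx - (\<Sum>l\<in>UNIV. V l * z l)"
    by (simp add: algebra_simps sum_subtractf sum_distrib_right[symmetric] s1)
  finally have A: "(\<Sum>l\<in>UNIV. V l * z l) \<le> ?Mx - V l0 * (?Mx - ?Mn)" using l0 by simp
  have "\<delta> * (?Mx - ?Mn) \<le> V l0 * (?Mx - ?Mn)"
    by (rule mult_right_mono[OF nn]) (simp add: l0[symmetric] le)
  with A show "(\<Sum>l\<in>UNIV. V l * z l) \<le> ?Mx - \<delta> * (?Mx - ?Mn)" by linarith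
  have "V l1 * (z l1 - ?Mn) \<le> (\<Sum>l\<in>UNIV. V l * (z l - ?Mn))"
    by (rule member_le_sum) (auto intro!: mult_nonneg_nonneg Vnn simp: le)
  also have "\<dots> = (\<Sum>l\<in>UNIV. V l * z l) - ?Mn"
    by (simp add: algebra_simps sum_subtractf sum_distrib_right[symmetric] s1)
  finally have B: "(\<Sum>l\<in>UNIV. V l * z l) \<ge> ?Mn + V l1 * (?Mx - ?Mn)" using l1 by simp
  have "\<delta> * (?Mx - ?Mn) \<le> V l1 * (?Mx - ?Mn)"
    by (rule mult_right_mono[OF nn]) (simp add: l1[symmetric] le)
  with B show "(\<Sum>l\<in>UNIV. V l * z l) \<ge> ?Mn + \<delta> * (?Mx - ?Mn)" by linarith
qed

lemma stoch_conv:
  fixes z :: "nat \<Rightarrow> 'a::finite \<Rightarrow> real"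
  assumes U: "\<And>k j. z (Suc k) j = (\<Sum>l\<in>UNIV. U j l * z k l)"
    and Unn: "\<And>j l. U j l \<ge> 0" and Us: "\<And>j. (\<Sum>l\<in>UNIV. U j l) = 1"
    and V: "\<And>k j. z (p + k) j = (\<Sum>l\<in>UNIV. V j l * z k l)"
    and Vd: "\<And>j l. V j l \<ge> \<delta>" and dpos: "\<delta> > 0" and Vs: "\<And>j. (\<Sum>l\<in>UNIV. V j l) = 1"
    and p: "p > 0"
  shows "\<exists>\<gamma>. (\<forall>j. (\<lambda>k. z k j) \<longlonglongrightarrow> \<gamma>) \<and> (\<forall>k j. Min (range (z k)) \<le> \<gamma>)"
proof -
  define mx where "mx k = Max (range (z k))" for k
  define mn where "mn k = Min (range (z k))" for k
  define d where "d k = mx k - mn k" for k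
  have bnd: "mn k \<le> z k j" "z k j \<le> mx k" for k j by (simp_all add: mx_def mn_def)
  have d_nn: "d k \<ge> 0" for k using bnd[of k] by (simp add: d_def) (meson order_trans)
  have mxS: "mx (Suc k) \<le> mx k" for k
  proof -
    have "z (Suc k) j \<le> mx k" for j
      using stoch_avg_bounds(1)[where V="U j" and \<delta>=0 and z="z k"] Unn Us U by (simp add: mx_def)
    then show ?thesis unfolding mx_def[of "Suc k"] by (simp add: Max_le_iff)
  qed
  have mnS: "mn k \<le> mn (Suc k)" for k
  proof -
    have "mn k \<le> z (Suc k) j" for j
      using stoch_avg_bounds(2)[where V="U j" and \<delta>=0 and z="z k"] Unn Us U by (simp add: mn_def)
    then show ?thesis unfolding mn_def[of "Suc k"] by (simp add: Min_ge_iff)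
  qed
  have dec: "decseq mx" using mxS by (rule decseq_SucI)
  have inc: "incseq mn" using mnS by (rule incseq_SucI)
  have decd: "decseq d" unfolding d_def using dec inc by (simp add: decseq_def incseq_def diff_mono)
  have dp: "d (p + k) \<le> (1 - \<delta>) * d k" for k
  proof -
    have "z (p + k) j \<le> mx k - \<delta> * d k" for j
      using stoch_avg_bounds(1)[where V="V j" and \<delta>=\<delta> and z="z k"] Vd Vs V dpos by (simp add: mx_def mn_def d_def)
    then have 1: "mx (p + k) \<le> mx k - \<delta> * d k" unfolding mx_def[of "p+k"] by (simp add: Max_le_iff)
    have "mn k + \<delta> * d k \<le> z (p + k) j" for j
      using stoch_avg_bounds(2)[where V="V j" and \<delta>=\<delta> and z="z k"] Vd Vs V dpos by (simp add: mx_def mn_def d_def)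
    then have 2: "mn k + \<delta> * d k \<le> mn (p + k)" unfolding mn_def[of "p+k"] by (simp add: Min_ge_iff)
    have "\<delta> * d k \<ge> 0" using dpos d_nn[of k] by simp
    then show ?thesis using 1 2 by (simp add: d_def algebra_simps)
  qed
  have d1: "\<delta> \<le> 1"
  proof -
    obtain j :: 'a where True by blast
    have "(\<Sum>l\<in>(UNIV::'a set). \<delta>) \<le> (\<Sum>l\<in>UNIV. V j l)" by (intro sum_mono Vd)
    then have "real CARD('a) * \<delta> \<le> 1" using Vs[of j] by simp
    moreover have "real CARD('a) \<ge> 1" by simp
    ultimately show ?thesis using dpos by (smt (verit) mult_le_cancel_right1)
  qed
  have djp: "d (j * p) \<le> (1 - \<delta>) ^ j * d 0" for j
  proof (induction j)
    case 0 then show ?case by simp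
  next
    case (Suc j)
    have "d (Suc j * p) = d (p + j * p)" by simp
    also have "\<dots> \<le> (1 - \<delta>) * d (j * p)" by (rule dp)
    also have "\<dots> \<le> (1 - \<delta>) * ((1 - \<delta>) ^ j * d 0)"
      by (rule mult_left_mono[OF Suc.IH]) (use d1 in simp)
    finally show ?case by simp
  qed
  have dk: "d k \<le> (1 - \<delta>) ^ (k div p) * d 0" for k
  proof -
    have "(k div p) * p \<le> k" by simp
    then have "d k \<le> d ((k div p) * p)" using decd by (simp add: decseq_def)
    then show ?thesis using djp[of "k div p"] by simp
  qed
  have divlim: "filterlim (\<lambda>k. k div p) at_top sequentially"
    unfolding filterlim_at_top eventually_sequentially
  proof
    fix Z show "\<exists>N. \<forall>k\<ge>N. Z \<le> k div p"
      by (rule exI[of _ "Z * p"]) (use p in \<open>auto simp: less_eq_div_iff_mult_less_eq\<close>)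
  qed
  have pw: "(\<lambda>j. (1 - \<delta>) ^ j * d 0) \<longlonglongrightarrow> 0 * d 0"
    by (intro tendsto_mult tendsto_const LIMSEQ_realpow_zero) (use dpos d1 in auto)
  have "(\<lambda>k. (1 - \<delta>) ^ (k div p) * d 0) \<longlonglongrightarrow> 0"
    using filterlim_compose[OF pw divlim] by simp
  then have dlim: "d \<longlonglongrightarrow> 0"
    by (rule tendsto_sandwich[rotated 2, OF tendsto_const]) (simp_all add: d_nn dk)
  have bdd: "bdd_above (range mn)"
  proof (rule bdd_aboveI[of _ "mx 0"])
    fix x assume "x \<in> range mn"
    then obtain k where "x = mn k" by blast
    obtain j :: 'a where True by blast
    have "mn k \<le> mx k" using bnd[of k j] by linarith
    also have "mx k \<le> mx 0" using dec by (simp add: decseq_def)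
    finally show "x \<le> mx 0" using \<open>x = mn k\<close> by simp
  qed
  define \<gamma> where "\<gamma> = (SUP k. mn k)"
  have mnlim: "mn \<longlonglongrightarrow> \<gamma>" unfolding \<gamma>_def by (rule LIMSEQ_incseq_SUP[OF bdd inc])
  have mxlim: "mx \<longlonglongrightarrow> \<gamma>"
  proof -
    have "(\<lambda>k. mn k + d k) \<longlonglongrightarrow> \<gamma> + 0" by (intro tendsto_add mnlim dlim)
    then show ?thesis by (simp add: d_def)
  qed
  have "(\<lambda>k. z k j) \<longlonglongrightarrow> \<gamma>" for j
    by (rule tendsto_sandwich[OF _ _ mnlim mxlim]) (simp_all add: bnd)
  moreover have "mn k \<le> \<gamma>" for k unfolding \<gamma>_def by (rule cSUP_upper[OF _ bdd]) simp
  ultimately show ?thesis unfolding mn_def by blast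
qed


lemma mat_mult_assoc: "mat_mult (mat_mult A B) C = mat_mult A (mat_mult B C)"
proof (intro ext)
  fix i j
  have "mat_mult (mat_mult A B) C i j = (\<Sum>k\<in>UNIV. \<Sum>l\<in>UNIV. A i l * B l k * C k j)"
    by (simp add: mat_mult_def sum_distrib_right)
  also have "\<dots> = (\<Sum>l\<in>UNIV. \<Sum>k\<in>UNIV. A i l * B l k * C k j)" by (rule sum.swap)
  also have "\<dots> = mat_mult A (mat_mult B C) i j"
    by (simp add: mat_mult_def sum_distrib_left mult.assoc)
  finally show "mat_mult (mat_mult A B) C i j = mat_mult A (mat_mult B C) i j" .
qed

lemma sum_ind_mult: "(\<Sum>k\<in>(UNIV::'a::finite set). (if i = k then 1 else 0) * f k) = (f i :: real)"
proof -
  have "(\<Sum>k\<in>(UNIV::'a set). (if i = k then 1 else 0) * f k) = (\<Sum>k\<in>UNIV. if i = k then f k else 0)"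
    by (rule sum.cong) auto
  then show ?thesis by simp
qed

lemma mat_mult_id: "mat_mult (\<lambda>i j. if i = j then 1 else 0) B = B"
  by (intro ext) (simp add: mat_mult_def sum_ind_mult)

lemma mat_pow_add: "mat_pow A (m + k) = mat_mult (mat_pow A m) (mat_pow A k)"
proof (induction m)
  case 0 then show ?case by (simp add: mat_mult_id)
next
  case (Suc m) then show ?case by (simp add: mat_mult_assoc)
qed

lemma mat_pow_nonneg: "(\<And>i j. A i j \<ge> 0) \<Longrightarrow> mat_pow A k i j \<ge> 0"
proof (induction k arbitrary: i j)
  case 0 then show ?case by simp
next
  case (Suc k) then show ?case by (simp add: mat_mult_def sum_nonneg)
qed

lemma eig_pow:
  assumes "\<And>i. (\<Sum>j\<in>UNIV. A i j * R j) = l * R i"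
  shows "(\<Sum>j\<in>UNIV. mat_pow A k i j * R j) = l ^ k * R i"
proof (induction k arbitrary: i)
  case 0 then show ?case by (simp add: sum_ind_mult)
next
  case (Suc k)
  have "(\<Sum>j\<in>UNIV. mat_pow A (Suc k) i j * R j) = (\<Sum>j\<in>UNIV. \<Sum>m\<in>UNIV. A i m * mat_pow A k m j * R j)"
    by (simp add: mat_mult_def sum_distrib_right)
  also have "\<dots> = (\<Sum>m\<in>UNIV. \<Sum>j\<in>UNIV. A i m * mat_pow A k m j * R j)" by (rule sum.swap)
  also have "\<dots> = (\<Sum>m\<in>UNIV. A i m * (l ^ k * R m))"
    by (simp add: Suc.IH[symmetric] sum_distrib_left mult.assoc)
  also have "\<dots> = l ^ k * (\<Sum>m\<in>UNIV. A i m * R m)"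
    by (simp add: sum_distrib_left algebra_simps)
  also have "\<dots> = l ^ k * (l * R i)" using assms[of i] by simp
  finally show ?case by simp
qed

lemma pow_at_top: "(x::real) > 1 \<Longrightarrow> filterlim (\<lambda>n. x ^ n) at_top sequentially"
  unfolding filterlim_at_top eventually_sequentially
proof
  fix Z :: real assume x: "x > 1"
  obtain N where "Z < x ^ N" using real_arch_pow[OF x] by blast
  then show "\<exists>N. \<forall>n\<ge>N. Z \<le> x ^ n"
    using x by (intro exI[of _ N]) (auto intro: order_trans[OF less_imp_le power_increasing])
qed

locale RSP = RS \<theta> for \<theta> :: "'a::finite \<Rightarrow> 'a list set" +
  fixes R :: "'a \<Rightarrow> real"
  assumes prim: "primitive_subst \<theta>" and pf: "is_right_pf_vector (subst_matrix \<theta>) R"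
begin

abbreviation "lam \<equiv> pf_eigenvalue (subst_matrix \<theta>)"

lemma R_nn: "R i \<ge> 0" and R_sum: "(\<Sum>i\<in>UNIV. R i) = 1"
  and eig: "(\<Sum>j\<in>UNIV. M i j * R j) = lam * R i"
  using pf by (auto simp: is_right_pf_vector_def)

lemma eigk: "(\<Sum>j\<in>UNIV. mat_pow M k i j * R j) = lam ^ k * R i"
  by (rule eig_pow[OF eig])

lemma LmR: "(\<Sum>c\<in>UNIV. Lm n c * R c) = lam ^ n"
proof -
  have "(\<Sum>c\<in>UNIV. Lm n c * R c) = (\<Sum>c\<in>UNIV. \<Sum>b\<in>UNIV. mat_pow M n b c * R c)"
    by (simp add: Lm_def sum_distrib_right)
  also have "\<dots> = (\<Sum>b\<in>UNIV. \<Sum>c\<in>UNIV. mat_pow M n b c * R c)" by (rule sum.swap)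
  also have "\<dots> = (\<Sum>b\<in>UNIV. lam ^ n * R b)" by (simp add: eigk)
  also have "\<dots> = lam ^ n" by (simp add: sum_distrib_left[symmetric] R_sum)
  finally show ?thesis .
qed

lemma lam_ge1: "lam \<ge> 1"
proof -
  have "(\<Sum>c\<in>UNIV. R c) \<le> (\<Sum>c\<in>UNIV. Lm 1 c * R c)"
    by (intro sum_mono) (use mult_right_mono[OF Lm_ge1 R_nn] in simp)
  then show ?thesis using LmR[of 1] R_sum by simp
qed

lemma lam_pos: "lam > 0" using lam_ge1 by simp

lemma Mp_nn: "mat_pow M k i j \<ge> 0"
  by (rule mat_pow_nonneg) (rule M_nonneg)

lemma prim_pow_ex: "\<exists>p>0. \<forall>i j. mat_pow M p i j > 0"
  using prim unfolding primitive_subst_def primitive_mat_def by blast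


lemma R_pos: "R i > 0"
proof -
  obtain p where p: "p > 0" "\<And>i j. mat_pow M p i j > 0" using prim_pow_ex by blast
  obtain j0 where j0: "R j0 > 0"
  proof (rule ccontr)
    assume "\<not> thesis"
    then have "\<forall>j. R j = 0" using R_nn that by (meson less_eq_real_def not_less)
    then show False using R_sum by simp
  qed
  have "mat_pow M p i j0 * R j0 \<le> (\<Sum>j\<in>UNIV. mat_pow M p i j * R j)"
    by (rule member_le_sum) (auto intro: mult_nonneg_nonneg Mp_nn R_nn)
  moreover have "mat_pow M p i j0 * R j0 > 0" using p(2) j0 by simp
  ultimately have "lam ^ p * R i > 0" using eigk[of p i] by simp
  then show ?thesis using R_nn[of i] lam_pos by (simp add: zero_less_mult_iff)
qed

lemma R_ne0: "R i \<noteq> 0" using R_pos[of i] by simp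

lemma dir_conv: "\<exists>\<gamma>>0. \<forall>j. (\<lambda>k. mat_pow M k j i / (lam ^ k * R j)) \<longlonglongrightarrow> \<gamma>"
proof -
  obtain p where p: "p > 0" "\<And>i j. mat_pow M p i j > 0" using prim_pow_ex by blast
  define z where "z k j = mat_pow M k j i / (lam ^ k * R j)" for k j
  define U where "U j l = M j l * R l / (lam * R j)" for j l
  define V where "V j l = mat_pow M p j l * R l / (lam ^ p * R j)" for j l
  define \<delta> where "\<delta> = Min (range (\<lambda>(j, l). V j l))"
  have Vpos: "V j l > 0" for j l
    unfolding V_def using p(2)[of j l] R_pos[of l] R_pos[of j] lam_pos by simp
  have "\<delta> \<in> range (\<lambda>(j, l). V j l)" unfolding \<delta>_def by (rule Min_in) auto
  then have dpos: "\<delta> > 0" using Vpos by auto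
  have Vd: "V j l \<ge> \<delta>" for j l unfolding \<delta>_def by (rule Min_le) auto
  have Unn: "U j l \<ge> 0" for j l
    unfolding U_def using M_nonneg[of j l] R_pos[of l] R_pos[of j] lam_pos by simp
  have Us: "(\<Sum>l\<in>UNIV. U j l) = 1" for j
  proof -
    have "(\<Sum>l\<in>UNIV. U j l) = (\<Sum>l\<in>UNIV. M j l * R l) / (lam * R j)"
      unfolding U_def by (simp add: sum_divide_distrib)
    then show ?thesis using eig[of j] R_ne0[of j] lam_pos by simp
  qed
  have Vs: "(\<Sum>l\<in>UNIV. V j l) = 1" for j
  proof -
    have "(\<Sum>l\<in>UNIV. V j l) = (\<Sum>l\<in>UNIV. mat_pow M p j l * R l) / (lam ^ p * R j)"
      unfolding V_def by (simp add: sum_divide_distrib)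
    then show ?thesis using eigk[of p j] R_ne0[of j] lam_pos by simp
  qed
  have Ustep: "z (Suc k) j = (\<Sum>l\<in>UNIV. U j l * z k l)" for k j
  proof -
    have "(\<Sum>l\<in>UNIV. U j l * z k l) = (\<Sum>l\<in>UNIV. M j l * mat_pow M k l i / (lam ^ Suc k * R j))"
      by (rule sum.cong) (use R_ne0 lam_pos in \<open>auto simp: U_def z_def field_simps\<close>)
    also have "\<dots> = z (Suc k) j"
      by (simp add: z_def mat_mult_def sum_divide_distrib)
    finally show ?thesis ..
  qed
  have Vstep: "z (p + k) j = (\<Sum>l\<in>UNIV. V j l * z k l)" for k j
  proof -
    have "(\<Sum>l\<in>UNIV. V j l * z k l) = (\<Sum>l\<in>UNIV. mat_pow M p j l * mat_pow M k l i / (lam ^ (p + k) * R j))"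
      by (rule sum.cong) (use R_ne0 lam_pos in \<open>auto simp: V_def z_def field_simps power_add\<close>)
    also have "\<dots> = z (p + k) j"
      by (simp add: z_def mat_pow_add mat_mult_def sum_divide_distrib)
    finally show ?thesis ..
  qed
  obtain \<gamma> where g: "\<forall>j. (\<lambda>k. z k j) \<longlonglongrightarrow> \<gamma>" "\<forall>k j. Min (range (z k)) \<le> \<gamma>"
    using stoch_conv[of z U p V \<delta>, OF Ustep Unn Us Vstep Vd dpos Vs p(1)] by blast
  have "Min (range (z p)) \<in> range (z p)" by (rule Min_in) auto
  moreover have "z p j > 0" for j
    unfolding z_def using p(2)[of j i] R_pos[of j] lam_pos by simp
  ultimately have "Min (range (z p)) > 0" by auto
  then have "\<gamma> > 0" using g(2) by (meson less_le_trans)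
  then show ?thesis using g(1) unfolding z_def by blast
qed

lemma Mp_eq: "mat_pow M k j i = lam ^ k * R j * (mat_pow M k j i / (lam ^ k * R j))"
  using R_ne0[of j] lam_pos by simp

lemma ratio_lim:
  assumes y: "(\<Sum>j\<in>UNIV. y j * R j) \<noteq> 0"
  shows "(\<lambda>k. (\<Sum>j\<in>UNIV. x j * mat_pow M k j i) / (\<Sum>j\<in>UNIV. y j * mat_pow M k j i))
           \<longlonglongrightarrow> (\<Sum>j\<in>UNIV. x j * R j) / (\<Sum>j\<in>UNIV. y j * R j)"
proof -
  obtain \<gamma> where g: "\<gamma> > 0" "\<And>j. (\<lambda>k. mat_pow M k j i / (lam ^ k * R j)) \<longlonglongrightarrow> \<gamma>"
    using dir_conv by blast
  define z where "z k j = mat_pow M k j i / (lam ^ k * R j)" for k j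
  have eq: "(\<Sum>j\<in>UNIV. f j * mat_pow M k j i) = lam ^ k * (\<Sum>j\<in>UNIV. f j * R j * z k j)" for f k
  proof -
    have "f j * mat_pow M k j i = lam ^ k * (f j * R j * z k j)" for j
      using R_ne0[of j] lam_pos by (simp add: z_def field_simps)
    then show ?thesis by (simp only: sum_distrib_left)
  qed
  have ev: "(\<Sum>j\<in>UNIV. x j * mat_pow M k j i) / (\<Sum>j\<in>UNIV. y j * mat_pow M k j i)
      = (\<Sum>j\<in>UNIV. x j * R j * z k j) / (\<Sum>j\<in>UNIV. y j * R j * z k j)" for k
    unfolding eq using lam_pos by simp
  have lx: "(\<lambda>k. \<Sum>j\<in>UNIV. x j * R j * z k j) \<longlonglongrightarrow> (\<Sum>j\<in>UNIV. x j * R j * \<gamma>)"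
    by (intro tendsto_sum tendsto_mult tendsto_const) (use g(2) in \<open>simp add: z_def\<close>)
  have ly: "(\<lambda>k. \<Sum>j\<in>UNIV. y j * R j * z k j) \<longlonglongrightarrow> (\<Sum>j\<in>UNIV. y j * R j * \<gamma>)"
    by (intro tendsto_sum tendsto_mult tendsto_const) (use g(2) in \<open>simp add: z_def\<close>)
  have sx: "(\<Sum>j\<in>UNIV. x j * R j * \<gamma>) = \<gamma> * (\<Sum>j\<in>UNIV. x j * R j)"
    and sy: "(\<Sum>j\<in>UNIV. y j * R j * \<gamma>) = \<gamma> * (\<Sum>j\<in>UNIV. y j * R j)"
    by (simp_all add: sum_distrib_left algebra_simps)
  have "(\<lambda>k. (\<Sum>j\<in>UNIV. x j * R j * z k j) / (\<Sum>j\<in>UNIV. y j * R j * z k j))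
          \<longlonglongrightarrow> (\<gamma> * (\<Sum>j\<in>UNIV. x j * R j)) / (\<gamma> * (\<Sum>j\<in>UNIV. y j * R j))"
    using tendsto_divide[OF lx ly] g(1) y unfolding sx sy by simp
  then show ?thesis unfolding ev using g(1) by simp
qed

lemma Lm_lim: "\<exists>\<gamma>>0. (\<lambda>k. Lm k i / lam ^ k) \<longlonglongrightarrow> \<gamma>"
proof -
  obtain \<gamma> where g: "\<gamma> > 0" "\<And>j. (\<lambda>k. mat_pow M k j i / (lam ^ k * R j)) \<longlonglongrightarrow> \<gamma>"
    using dir_conv by blast
  have eq: "Lm k i / lam ^ k = (\<Sum>j\<in>UNIV. R j * (mat_pow M k j i / (lam ^ k * R j)))" for k
    unfolding Lm_def using R_ne0 lam_pos by (simp add: sum_divide_distrib)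
  have "(\<lambda>k. \<Sum>j\<in>UNIV. R j * (mat_pow M k j i / (lam ^ k * R j))) \<longlonglongrightarrow> (\<Sum>j\<in>UNIV. R j * \<gamma>)"
    by (intro tendsto_sum tendsto_mult tendsto_const g(2))
  then have "(\<lambda>k. Lm k i / lam ^ k) \<longlonglongrightarrow> \<gamma>"
    unfolding eq by (simp add: sum_distrib_right[symmetric] R_sum)
  then show ?thesis using g(1) by blast
qed

lemma Lm_at_top: "lam > 1 \<Longrightarrow> filterlim (\<lambda>k. Lm k i) at_top sequentially"
proof -
  assume l: "lam > 1"
  obtain \<gamma> where g: "\<gamma> > 0" "(\<lambda>k. Lm k i / lam ^ k) \<longlonglongrightarrow> \<gamma>" using Lm_lim by blast
  have "filterlim (\<lambda>k. Lm k i / lam ^ k * lam ^ k) at_top sequentially"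
    by (rule filterlim_tendsto_pos_mult_at_top[OF g(2) g(1) pow_at_top[OF l]])
  then show ?thesis using lam_pos by simp
qed

end


context RSP begin

definition qR :: "nat \<Rightarrow> real" where "qR n = (\<Sum>j\<in>UNIV. q n j * R j)"
definition x :: "nat \<Rightarrow> real" where "x n = qR n / lam ^ n"
definition S :: real where "S = (SUP n. x n)"
definition r :: "nat \<Rightarrow> 'a \<Rightarrow> real" where "r n a = q n a / Lm n a"


lemma swapR: "(\<Sum>i\<in>UNIV. R i * (\<Sum>c\<in>UNIV. mat_pow M k c i * f c)) = lam ^ k * (\<Sum>c\<in>UNIV. f c * R c)"
proof -
  have "(\<Sum>i\<in>UNIV. R i * (\<Sum>c\<in>UNIV. mat_pow M k c i * f c)) = (\<Sum>i\<in>UNIV. \<Sum>c\<in>UNIV. f c * (mat_pow M k c i * R i))"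
    by (simp add: sum_distrib_left algebra_simps)
  also have "\<dots> = (\<Sum>c\<in>UNIV. \<Sum>i\<in>UNIV. f c * (mat_pow M k c i * R i))" by (rule sum.swap)
  also have "\<dots> = (\<Sum>c\<in>UNIV. f c * (lam ^ k * R c))" by (simp add: sum_distrib_left[symmetric] eigk)
  also have "\<dots> = lam ^ k * (\<Sum>c\<in>UNIV. f c * R c)" by (simp add: sum_distrib_left algebra_simps)
  finally show ?thesis .
qed

lemma qR_nn: "qR n \<ge> 0" unfolding qR_def by (intro sum_nonneg mult_nonneg_nonneg q_nonneg R_nn)

lemma qR_lower: "lam ^ k * qR n \<le> qR (n + k)"
proof -
  have "lam ^ k * qR n = (\<Sum>i\<in>UNIV. R i * (\<Sum>c\<in>UNIV. mat_pow M k c i * q n c))"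
    unfolding qR_def by (rule swapR[symmetric])
  also have "\<dots> \<le> (\<Sum>i\<in>UNIV. R i * q (n + k) i)"
    by (intro sum_mono mult_left_mono q_add_lower R_nn)
  also have "\<dots> = qR (n + k)" by (simp add: qR_def mult.commute)
  finally show ?thesis .
qed

lemma qR_upper: "qR (n + k) \<le> qR k + lam ^ k * qR n"
proof -
  have "qR (n + k) = (\<Sum>i\<in>UNIV. R i * q (n + k) i)" by (simp add: qR_def mult.commute)
  also have "\<dots> \<le> (\<Sum>i\<in>UNIV. R i * (q k i + (\<Sum>c\<in>UNIV. mat_pow M k c i * q n c)))"
    by (intro sum_mono mult_left_mono q_add_upper R_nn)
  also have "\<dots> = (\<Sum>i\<in>UNIV. R i * q k i) + (\<Sum>i\<in>UNIV. R i * (\<Sum>c\<in>UNIV. mat_pow M k c i * q n c))"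
    by (simp add: algebra_simps sum.distrib)
  also have "\<dots> = qR k + lam ^ k * qR n"
    unfolding qR_def swapR by (simp add: mult.commute)
  finally show ?thesis .
qed

lemma qR_le: "qR n \<le> lam ^ n * (ln (real CARD('a)))"
proof -
  have "qR n \<le> (\<Sum>j\<in>UNIV. (Lm n j * (ln (real CARD('a)))) * R j)"
    unfolding qR_def by (intro sum_mono mult_right_mono q_le_Lm R_nn)
  also have "\<dots> = (ln (real CARD('a))) * (\<Sum>j\<in>UNIV. Lm n j * R j)"
    by (simp add: sum_distrib_left algebra_simps)
  also have "\<dots> = lam ^ n * (ln (real CARD('a)))" by (simp add: LmR)
  finally show ?thesis .
qed

lemma x_le: "x n \<le> (ln (real CARD('a)))"
  using qR_le[of n] lam_pos by (simp add: x_def divide_le_eq mult.commute)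

lemma x_nn: "x n \<ge> 0" using qR_nn[of n] lam_pos by (simp add: x_def)

lemma x_mono: "x n \<le> x (n + k)"
proof -
  have "x n = lam ^ k * qR n / lam ^ (n + k)" using lam_pos by (simp add: x_def power_add)
  also have "\<dots> \<le> qR (n + k) / lam ^ (n + k)" using lam_pos by (intro divide_right_mono qR_lower) simp
  finally show ?thesis by (simp add: x_def)
qed

lemma x_inc: "incseq x"
  unfolding incseq_def by (metis le_add_diff_inverse x_mono)

lemma x_bdd: "bdd_above (range x)" by (rule bdd_aboveI[of _ "ln (real CARD('a))"]) (auto intro: x_le)

lemma x_lim: "x \<longlonglongrightarrow> S" unfolding S_def by (rule LIMSEQ_incseq_SUP[OF x_bdd x_inc])

lemma x_le_S: "x n \<le> S" unfolding S_def by (rule cSUP_upper[OF _ x_bdd]) simp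

lemma S_nn: "S \<ge> 0" using x_nn[of 0] x_le_S[of 0] by linarith

lemma x_0: "x 0 = 0" by (simp add: x_def qR_def q_0)

lemma S_upper:
  assumes l: "lam > 1" and m: "m \<ge> 1"
  shows "S \<le> qR m / (lam ^ m - 1)"
proof -
  define \<Lambda> where "\<Lambda> = lam ^ m"
  have L1: "\<Lambda> > 1" unfolding \<Lambda>_def using l m by (simp add: one_less_power)
  define B where "B = qR m / (\<Lambda> - 1)"
  have xj: "x (j * m) \<le> B * (1 - 1 / \<Lambda> ^ j)" for j
  proof (induction j)
    case 0 then show ?case by (simp add: x_0)
  next
    case (Suc j)
    have pw: "lam ^ (i * m) = \<Lambda> ^ i" for i
      unfolding \<Lambda>_def by (simp add: power_mult[symmetric] mult.commute)
    have "qR (j * m + m) \<le> qR m + \<Lambda> * qR (j * m)" using qR_upper[of "j*m" m] by (simp add: \<Lambda>_def)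
    moreover have "j * m + m = Suc j * m" by simp
    ultimately have "qR (Suc j * m) \<le> qR m + \<Lambda> * qR (j * m)" by simp
    then have "x (Suc j * m) \<le> (qR m + \<Lambda> * qR (j * m)) / \<Lambda> ^ Suc j"
      unfolding x_def pw using L1 by (intro divide_right_mono) simp_all
    also have "\<dots> = qR m / \<Lambda> ^ Suc j + x (j * m)"
      unfolding x_def pw using L1 by (simp add: field_simps)
    also have "\<dots> \<le> qR m / \<Lambda> ^ Suc j + B * (1 - 1 / \<Lambda> ^ j)" using Suc.IH by simp
    also have "\<dots> = B * (1 - 1 / \<Lambda> ^ Suc j)"
      using L1 by (simp add: B_def field_simps)
    finally show ?case .
  qed
  have "x k \<le> B" for k
  proof -
    have "x k \<le> x (k * m)" using x_inc m by (simp add: incseq_def)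
    also have "\<dots> \<le> B * (1 - 1 / \<Lambda> ^ k)" by (rule xj)
    also have "\<dots> \<le> B"
    proof -
      have "B \<ge> 0" using L1 qR_nn[of m] by (simp add: B_def)
      moreover have "1 - 1 / \<Lambda> ^ k \<le> 1" using L1 by simp
      ultimately show ?thesis by (simp add: mult_left_le)
    qed
    finally show ?thesis .
  qed
  then have "S \<le> B" unfolding S_def by (intro cSUP_least) auto
  then show ?thesis by (simp add: B_def \<Lambda>_def)
qed

end


context RSP begin

lemma Lm_pos: "Lm n a > 0" using Lm_ge1[of n a] by simp

definition rat :: "nat \<Rightarrow> 'a \<Rightarrow> nat \<Rightarrow> real" where
  "rat N a k = (\<Sum>c\<in>UNIV. q N c * mat_pow M k c a) / (\<Sum>c\<in>UNIV. Lm N c * mat_pow M k c a)"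

lemma rat_lim: "(\<lambda>k. rat N a k) \<longlonglongrightarrow> x N"
proof -
  have "(\<Sum>j\<in>UNIV. Lm N j * R j) \<noteq> 0" using LmR[of N] lam_pos by simp
  from ratio_lim[OF this, of "q N" a]
  show ?thesis unfolding rat_def x_def qR_def LmR .
qed

lemma den_eq: "(\<Sum>c\<in>UNIV. Lm N c * mat_pow M k c a) = Lm (N + k) a"
  by (simp add: Lm_add mult.commute)

lemma rat_le_r: "rat N a k \<le> r (N + k) a"
proof -
  have "(\<Sum>c\<in>UNIV. q N c * mat_pow M k c a) \<le> q (N + k) a"
    using q_add_lower[of k a N] by (simp add: mult.commute)
  then show ?thesis unfolding rat_def den_eq r_def
    by (rule divide_right_mono) (use Lm_pos in \<open>simp add: less_imp_le\<close>)
qed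

lemma r_le_rat:
  assumes B: "B > 0" "\<And>c. B \<le> Lm N c"
  shows "r (N + k) a \<le> ln (real CARD('a)) / B + rat N a k"
proof -
  let ?L = "ln (real CARD('a))"
  have den: "Lm (N + k) a \<ge> B * Lm k a"
  proof -
    have "B * Lm k a = (\<Sum>c\<in>UNIV. B * mat_pow M k c a)" by (simp add: Lm_def sum_distrib_left)
    also have "\<dots> \<le> (\<Sum>c\<in>UNIV. Lm N c * mat_pow M k c a)"
      by (intro sum_mono mult_right_mono B(2) Mp_nn)
    finally show ?thesis by (simp add: den_eq)
  qed
  have "q (N + k) a \<le> q k a + (\<Sum>c\<in>UNIV. q N c * mat_pow M k c a)"
    using q_add_upper[of N k a] by (simp add: mult.commute)
  then have "r (N + k) a \<le> q k a / Lm (N + k) a + rat N a k"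
    unfolding r_def rat_def den_eq using Lm_pos[of "N+k" a]
    by (simp add: add_divide_distrib[symmetric] divide_right_mono)
  also have "q k a / Lm (N + k) a \<le> ?L / B"
  proof -
    have "q k a \<le> Lm k a * ?L" by (rule q_le_Lm)
    also have "\<dots> = (B * Lm k a) * (?L / B)" using B(1) by simp
    also have "\<dots> \<le> Lm (N + k) a * (?L / B)"
      by (rule mult_right_mono[OF den]) (use B(1) in simp)
    finally show ?thesis using Lm_pos[of "N+k" a] by (simp add: divide_le_eq mult.commute)
  qed
  then have "q k a / Lm (N + k) a + rat N a k \<le> ?L / B + rat N a k" by simp
  finally show ?thesis .
qed

lemma r_lim:
  assumes l: "lam > 1"
  shows "(\<lambda>n. r n a) \<longlonglongrightarrow> S"
proof (rule order_tendstoI)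
  fix e assume e: "e < S"
  then obtain N where N: "e < x N"
    unfolding S_def using less_cSUP_iff[OF _ x_bdd] by blast
  have "eventually (\<lambda>k. e < rat N a k) sequentially"
    by (rule order_tendstoD(1)[OF rat_lim N])
  then have "eventually (\<lambda>k. e < r (k + N) a) sequentially"
  proof eventually_elim
    case (elim k)
    have "rat N a k \<le> r (N + k) a" by (rule rat_le_r)
    then show ?case using elim by (simp add: add.commute)
  qed
  then show "eventually (\<lambda>n. e < r n a) sequentially"
    using eventually_sequentially_seg[of "\<lambda>n. e < r n a" N] by blast
next
  fix e assume e: "S < e"
  define \<epsilon> where "\<epsilon> = e - S"
  have \<epsilon>: "\<epsilon> > 0" using e by (simp add: \<epsilon>_def)
  define B where "B = max 1 (2 * ln (real CARD('a)) / \<epsilon>)"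
  have B1: "B > 0" by (simp add: B_def)
  have LB: "ln (real CARD('a)) / B \<le> \<epsilon> / 2"
  proof -
    have "2 * ln (real CARD('a)) / \<epsilon> \<le> B" by (simp add: B_def)
    then have "2 * ln (real CARD('a)) \<le> B * \<epsilon>" using \<epsilon> by (simp add: divide_le_eq)
    then show ?thesis using B1 by (simp add: divide_le_eq field_simps)
  qed
  have "eventually (\<lambda>N. \<forall>c. B \<le> Lm N c) sequentially"
  proof (rule eventually_all_finite)
    fix c show "eventually (\<lambda>N. B \<le> Lm N c) sequentially"
      using Lm_at_top[OF l, of c] unfolding filterlim_at_top by blast
  qed
  then obtain N where N: "\<And>c. B \<le> Lm N c" unfolding eventually_sequentially by blast
  have "eventually (\<lambda>k. rat N a k < x N + \<epsilon> / 2) sequentially"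
    by (rule order_tendstoD(2)[OF rat_lim]) (use \<epsilon> in simp)
  then have "eventually (\<lambda>k. r (k + N) a < e) sequentially"
  proof eventually_elim
    case (elim k)
    have "r (N + k) a \<le> ln (real CARD('a)) / B + rat N a k" by (rule r_le_rat[OF B1 N])
    also have "\<dots> < \<epsilon> / 2 + (x N + \<epsilon> / 2)" using LB elim by linarith
    also have "\<dots> \<le> e" using x_le_S[of N] by (simp add: \<epsilon>_def)
    finally show ?case by (simp add: add.commute)
  qed
  then show "eventually (\<lambda>n. r n a < e) sequentially"
    using eventually_sequentially_seg[of "\<lambda>n. r n a < e" N] by blast
qed

end


context RSP begin

definition Nl :: "nat \<Rightarrow> nat" where "Nl l = card (language_len \<theta> l)"

lemma lang_sub: "p @ v @ s \<in> language \<theta> \<Longrightarrow> v \<in> language \<theta>"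
proof -
  assume "p @ v @ s \<in> language \<theta>"
  then obtain m a w p' s' where w: "w \<in> subst_pow \<theta> m a" "w = p' @ (p @ v @ s) @ s'"
    unfolding language_def by blast
  then have "w = (p' @ p) @ v @ (s @ s')" by simp
  then show ?thesis unfolding language_def using w(1) by blast
qed

lemma P_lang: "w \<in> P \<theta> n [a] \<Longrightarrow> w \<in> language \<theta>"
proof -
  assume "w \<in> P \<theta> n [a]"
  then have "w \<in> subst_pow \<theta> n a \<and> w = [] @ w @ []" by (simp add: subst_pow_P)
  then show ?thesis unfolding language_def by blast
qed

lemma lang_len_sub: "language_len \<theta> l \<subseteq> {xs. length xs = l}"
  unfolding language_len_def by blast

lemma fin_lists: "finite {xs :: 'a list. length xs = l}"
  using finite_lists_length_eq[of "UNIV :: 'a set" l] by simp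

lemma lang_len_fin: "finite (language_len \<theta> l)"
  by (rule finite_subset[OF lang_len_sub fin_lists])

lemma Nl_le_K: "Nl l \<le> CARD('a) ^ l"
  unfolding Nl_def using card_mono[OF fin_lists lang_len_sub] card_lists_eq by simp

lemma submult: "Nl (a + b) \<le> Nl a * Nl b"
proof -
  let ?f = "\<lambda>u. (take a u, drop a u)"
  have inj: "inj_on ?f (language_len \<theta> (a + b))"
    by (rule inj_onI) (metis append_take_drop_id prod.inject)
  have sub: "?f ` language_len \<theta> (a + b) \<subseteq> language_len \<theta> a \<times> language_len \<theta> b"
  proof
    fix y assume "y \<in> ?f ` language_len \<theta> (a + b)"
    then obtain u where u: "u \<in> language \<theta>" "length u = a + b" "y = ?f u"
      unfolding language_len_def by blast
    have "[] @ take a u @ drop a u \<in> language \<theta>" using u(1) by simp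
    then have 1: "take a u \<in> language \<theta>" by (rule lang_sub)
    have "take a u @ drop a u @ [] \<in> language \<theta>" using u(1) by simp
    then have 2: "drop a u \<in> language \<theta>" by (rule lang_sub)
    show "y \<in> language_len \<theta> a \<times> language_len \<theta> b"
      using 1 2 u(2,3) unfolding language_len_def by simp
  qed
  have "card (language_len \<theta> (a + b)) \<le> card (language_len \<theta> a \<times> language_len \<theta> b)"
    by (rule card_inj_on_le[OF inj sub]) (simp add: lang_len_fin)
  then show ?thesis unfolding Nl_def by (simp add: card_cartesian_product)
qed

lemma Nl_pow: "Nl (t * l + \<rho>) \<le> Nl l ^ t * Nl \<rho>"
proof (induction t)
  case 0 then show ?case by simp
next
  case (Suc t)
  have "Nl (Suc t * l + \<rho>) = Nl (l + (t * l + \<rho>))" by (simp add: add.assoc)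
  also have "\<dots> \<le> Nl l * Nl (t * l + \<rho>)" by (rule submult)
  also have "\<dots> \<le> Nl l * (Nl l ^ t * Nl \<rho>)" by (rule mult_left_mono[OF Suc.IH]) simp
  finally show ?case by simp
qed

lemma q_le_lnN: "q n a \<le> ln (real (Nl (ell \<theta> n a)))"
proof -
  have sub: "P \<theta> n [a] \<subseteq> language_len \<theta> (ell \<theta> n a)"
    unfolding language_len_def using P_lang length_P_ell by blast
  have "card (P \<theta> n [a]) \<le> Nl (ell \<theta> n a)" unfolding Nl_def by (rule card_mono[OF lang_len_fin sub])
  then show ?thesis unfolding q_eq using card_P_pos[of n "[a]"] by simp
qed

lemma Nl_pos: assumes l: "lam > 1" shows "Nl k > 0"
proof -
  obtain a :: 'a where True by blast
  have "eventually (\<lambda>n. real k \<le> Lm n a) sequentially"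
    using Lm_at_top[OF l, of a] unfolding filterlim_at_top by blast
  then obtain n where n: "real k \<le> Lm n a" unfolding eventually_sequentially by blast
  obtain w where w: "w \<in> P \<theta> n [a]" using P_ne by blast
  have "k \<le> length w" using n length_P[OF w] by simp
  have "[] @ take k w @ drop k w \<in> language \<theta>" using P_lang[OF w] by simp
  then have "take k w \<in> language \<theta>" by (rule lang_sub)
  then have "take k w \<in> language_len \<theta> k"
    unfolding language_len_def using \<open>k \<le> length w\<close> by simp
  then show ?thesis unfolding Nl_def using lang_len_fin card_gt_0_iff by blast
qed

lemma lower_N:
  assumes l: "lam > 1" and l1: "k \<ge> 1"
  shows "S \<le> ln (real (Nl k)) / real k"
proof -
  obtain a :: 'a where True by blast
  let ?Lk = "ln (real (Nl k)) / real k"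
  let ?K = "ln (real CARD('a))"
  define L where "L n = ell \<theta> n a" for n
  have Lr: "real (L n) = Lm n a" for n by (simp add: L_def ell_eq)
  have Lpos: "real (L n) > 0" for n using Lr Lm_pos by simp
  have key: "?Lk * (real (L n div k * k) / real (L n)) \<ge> r n a - real k * ?K / real (L n)" for n
  proof -
    define t where "t = L n div k"
    define \<rho> where "\<rho> = L n mod k"
    have Ln: "L n = t * k + \<rho>" by (simp add: t_def \<rho>_def)
    have \<rho>k: "\<rho> < k" using l1 by (simp add: \<rho>_def)
    have "Nl (L n) \<le> Nl k ^ t * Nl \<rho>" unfolding Ln by (rule Nl_pow)
    then have "real (Nl (L n)) \<le> real (Nl k) ^ t * real (Nl \<rho>)"
      by (metis of_nat_le_iff of_nat_mult of_nat_power)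
    then have "ln (real (Nl (L n))) \<le> ln (real (Nl k) ^ t * real (Nl \<rho>))"
      using Nl_pos[OF l] by simp
    also have "\<dots> = real t * ln (real (Nl k)) + ln (real (Nl \<rho>))"
      using Nl_pos[OF l, of k] Nl_pos[OF l, of \<rho>] by (simp add: ln_mult ln_realpow)
    also have "ln (real (Nl \<rho>)) \<le> real \<rho> * ?K"
    proof -
      have "real (Nl \<rho>) \<le> real CARD('a) ^ \<rho>" by (metis Nl_le_K of_nat_le_iff of_nat_power)
      then have "ln (real (Nl \<rho>)) \<le> ln (real CARD('a) ^ \<rho>)" using Nl_pos[OF l, of \<rho>] by simp
      then show ?thesis by (simp add: ln_realpow)
    qed
    also have "real \<rho> * ?K \<le> real k * ?K" using \<rho>k by (intro mult_right_mono) simp_all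
    finally have A: "ln (real (Nl (L n))) \<le> real t * ln (real (Nl k)) + real k * ?K" by simp
    have "q n a \<le> ln (real (Nl (L n)))" unfolding L_def by (rule q_le_lnN)
    moreover have "?Lk * real (t * k) = real t * ln (real (Nl k))" using l1 by simp
    ultimately have B: "q n a - real k * ?K \<le> ?Lk * real (t * k)" using A by linarith
    have "r n a - real k * ?K / real (L n) = (q n a - real k * ?K) / real (L n)"
      by (simp add: r_def Lr diff_divide_distrib)
    also have "\<dots> \<le> ?Lk * real (t * k) / real (L n)"
      by (rule divide_right_mono[OF B]) simp
    finally show ?thesis by (simp add: t_def)
  qed
  have Lt: "filterlim (\<lambda>n. real (L n)) at_top sequentially" unfolding Lr by (rule Lm_at_top[OF l])
  have z1: "(\<lambda>n. real k * ?K / real (L n)) \<longlonglongrightarrow> 0"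
    by (rule tendsto_divide_0[OF tendsto_const filterlim_at_top_imp_at_infinity[OF Lt]])
  have z2: "(\<lambda>n. real k / real (L n)) \<longlonglongrightarrow> 0"
    by (rule tendsto_divide_0[OF tendsto_const filterlim_at_top_imp_at_infinity[OF Lt]])
  have frac: "(\<lambda>n. real (L n div k * k) / real (L n)) \<longlonglongrightarrow> 1"
  proof -
    have eq: "real (L n div k * k) / real (L n) = 1 - real (L n mod k) / real (L n)" for n
    proof -
      have "real (L n div k * k) = real (L n) - real (L n mod k)"
        by (metis add_diff_cancel_right' div_mult_mod_eq of_nat_add)
      then show ?thesis using Lpos[of n] by (simp add: diff_divide_distrib)
    qed
    have "(\<lambda>n. real (L n mod k) / real (L n)) \<longlonglongrightarrow> 0"
    proof (rule tendsto_sandwich[OF _ _ tendsto_const z2])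
      show "eventually (\<lambda>n. 0 \<le> real (L n mod k) / real (L n)) sequentially" by simp
      show "eventually (\<lambda>n. real (L n mod k) / real (L n) \<le> real k / real (L n)) sequentially"
        using l1 Lpos by (intro always_eventually allI divide_right_mono) (simp_all add: less_imp_le)
    qed
    then have "(\<lambda>n. 1 - real (L n mod k) / real (L n)) \<longlonglongrightarrow> 1 - 0" by (intro tendsto_diff tendsto_const)
    then show ?thesis unfolding eq by simp
  qed
  have lhs: "(\<lambda>n. ?Lk * (real (L n div k * k) / real (L n))) \<longlonglongrightarrow> ?Lk * 1"
    by (intro tendsto_mult tendsto_const frac)
  have rhs: "(\<lambda>n. r n a - real k * ?K / real (L n)) \<longlonglongrightarrow> S - 0"
    by (intro tendsto_diff r_lim[OF l] z1)
  have ev: "eventually (\<lambda>n. r n a - real k * ?K / real (L n) \<le> ?Lk * (real (L n div k * k) / real (L n))) sequentially"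
    using key by (intro always_eventually allI)
  have "S - 0 \<le> ?Lk * 1"
    by (rule tendsto_le[OF _ lhs rhs ev]) simp
  then show ?thesis by simp
qed

end


context RS begin

lemma strip_front:
  assumes Lmx: "\<And>c. ell \<theta> n c \<le> Lmx" "Lmx \<ge> 1"
  shows "w \<in> P \<theta> n v \<Longrightarrow> w = p @ u @ s \<Longrightarrow> \<exists>v' w' p'. w' \<in> P \<theta> n v' \<and> w' = p' @ u @ s \<and> length p' < Lmx"
proof (induction v arbitrary: w p)
  case Nil
  then have "w = []" by simp
  then have "p = []" "u = []" "s = []" using Nil.prems(2) by simp_all
  then show ?case using Lmx(2) by (intro exI[of _ "[]"]) simp
next
  case (Cons c v)
  from Cons.prems(1) obtain x w1 where xw: "w = x @ w1" "x \<in> P \<theta> n [c]" "w1 \<in> P \<theta> n v"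
    unfolding P_Cons[of \<theta> n c v] mem_app_set by blast
  have lx: "length x = ell \<theta> n c" using length_P_ell[OF xw(2)] .
  show ?case
  proof (cases "length p < length x")
    case True
    then show ?thesis using Cons.prems lx Lmx(1)[of c] by (intro exI[of _ "c # v"] exI[of _ w] exI[of _ p]) simp
  next
    case False
    have "w1 = drop (length x) (x @ w1)" by simp
    also have "\<dots> = drop (length x) (p @ u @ s)" using xw(1) Cons.prems(2) by simp
    also have "\<dots> = drop (length x) p @ u @ s" using False by simp
    finally have "w1 = drop (length x) p @ u @ s" .
    then show ?thesis using Cons.IH[OF xw(3)] by blast
  qed
qed

lemma strip_back:
  assumes Lmx: "\<And>c. ell \<theta> n c \<le> Lmx" "Lmx \<ge> 1"
  shows "w \<in> P \<theta> n v \<Longrightarrow> w = p @ u @ s \<Longrightarrow> \<exists>v' w' s'. w' \<in> P \<theta> n v' \<and> w' = p @ u @ s' \<and> length s' < Lmx"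
proof (induction v arbitrary: w s rule: rev_induct)
  case Nil
  then have "w = []" by simp
  then have "p = []" "u = []" "s = []" using Nil.prems(2) by simp_all
  then show ?case using Lmx(2) by (intro exI[of _ "[]"]) simp
next
  case (snoc c v)
  from snoc.prems(1) obtain y x where yx: "w = y @ x" "y \<in> P \<theta> n v" "x \<in> P \<theta> n [c]"
    unfolding P_append[of \<theta> n v "[c]"] mem_app_set by blast
  have lx: "length x = ell \<theta> n c" using length_P_ell[OF yx(3)] .
  show ?case
  proof (cases "length s < length x")
    case True
    then show ?thesis using snoc.prems lx Lmx(1)[of c] by (intro exI[of _ "v @ [c]"] exI[of _ w] exI[of _ s]) simp
  next
    case False
    define k where "k = length s - length x"
    have sk: "s = take k s @ drop k s" by simp
    have ld: "length (drop k s) = length x" using False by (simp add: k_def)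
    have eq: "y @ x = (p @ u @ take k s) @ drop k s" using yx(1) snoc.prems(2) sk by (metis append_assoc)
    have "y = p @ u @ take k s"
      using append_eq_append_conv[of y "p @ u @ take k s" x "drop k s"] eq ld by simp
    then show ?thesis using snoc.IH[OF yx(2)] by blast
  qed
qed

lemma lang_origin:
  assumes u: "u \<in> language \<theta>" and lu: "\<And>c. ell \<theta> n c < length u"
  shows "\<exists>v w p s. w \<in> P \<theta> n v \<and> w = p @ u @ s"
proof -
  obtain m a w p s where w: "w \<in> P \<theta> m [a]" "w = p @ u @ s"
    using u unfolding language_def subst_pow_P by blast
  have "\<not> m < n"
  proof
    assume "m < n"
    then have "Lm m a \<le> Lm n a" by (intro Lm_mono) simp
    then have "ell \<theta> m a \<le> ell \<theta> n a" by (simp add: ell_eq[symmetric])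
    moreover have "length u \<le> length w" using w(2) by simp
    ultimately show False using length_P_ell[OF w(1)] lu[of a] by simp
  qed
  then have "m = n + (m - n)" by simp
  with w(1) obtain v where "v \<in> P \<theta> (m - n) [a]" "w \<in> P \<theta> n v"
    using P_add[of \<theta> n "m - n" "[a]"] by auto
  then show ?thesis using w(2) by blast
qed

end

context RSP begin

lemma cover_count:
  fixes n l Lmx Lmin :: nat and \<mu> :: real
  assumes Lmx: "\<And>c. ell \<theta> n c \<le> Lmx" and Lmin: "\<And>c. Lmin \<le> ell \<theta> n c" "Lmin \<ge> 1"
    and l: "Lmx < l" and mu: "\<mu> \<ge> 0" "\<And>c. q n c \<le> \<mu> * real (ell \<theta> n c)"
  shows "real (Nl l) \<le> real ((l + 2*Lmx) div Lmin + 1) * real CARD('a) ^ ((l + 2*Lmx) div Lmin)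
            * exp (\<mu> * real (l + 2*Lmx)) * real Lmx"
proof -
  define D where "D = (l + 2*Lmx) div Lmin"
  define Vs where "Vs = {v :: 'a list. length v \<le> D \<and> sum_list (map (ell \<theta> n) v) < l + 2*Lmx}"
  define F where "F v = (\<Union>w\<in>P \<theta> n v. (\<lambda>j. take l (drop j w)) ` {..<Lmx})" for v
  obtain c0 :: 'a where True by blast
  have Lmx1: "Lmx \<ge> 1" using Lmin(1)[of c0] Lmin(2) Lmx[of c0] by linarith
  have sub: "language_len \<theta> l \<subseteq> (\<Union>v\<in>Vs. F v)"
  proof
    fix u assume "u \<in> language_len \<theta> l"
    then have u: "u \<in> language \<theta>" "length u = l" by (simp_all add: language_len_def)
    have lu: "ell \<theta> n c < length u" for c using Lmx[of c] l u(2) by linarith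
    obtain v w p s where 1: "w \<in> P \<theta> n v" "w = p @ u @ s" using lang_origin[OF u(1) lu] by blast
    obtain v1 w1 p1 where 2: "w1 \<in> P \<theta> n v1" "w1 = p1 @ u @ s" "length p1 < Lmx"
      using strip_front[OF Lmx Lmx1 1] by blast
    obtain v2 w2 s2 where 3: "w2 \<in> P \<theta> n v2" "w2 = p1 @ u @ s2" "length s2 < Lmx"
      using strip_back[OF Lmx Lmx1 2(1,2)] by blast
    have lw2: "length w2 = sum_list (map (ell \<theta> n) v2)" by (rule length_P_word[OF 3(1)])
    have lt: "length w2 < l + 2*Lmx" using 2(3) 3(2,3) u(2) by simp
    have "sum_list (map (\<lambda>_. Lmin) v2) \<le> sum_list (map (ell \<theta> n) v2)"
      by (rule sum_list_mono) (rule Lmin(1))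
    moreover have "sum_list (map (\<lambda>_. Lmin) v2) = length v2 * Lmin" by (induction v2) simp_all
    ultimately have "length v2 * Lmin \<le> l + 2*Lmx" using lw2 lt by linarith
    then have "length v2 \<le> D" unfolding D_def using Lmin(2) by (simp add: less_eq_div_iff_mult_less_eq)
    then have "v2 \<in> Vs" unfolding Vs_def using lw2 lt by simp
    moreover have "u = take l (drop (length p1) w2)" using 3(2) u(2) by simp
    then have "u \<in> F v2" unfolding F_def using 3(1) 2(3) by blast
    ultimately show "u \<in> (\<Union>v\<in>Vs. F v)" by blast
  qed
  have finVs: "finite Vs"
  proof (rule finite_subset)
    show "Vs \<subseteq> {xs :: 'a list. set xs \<subseteq> UNIV \<and> length xs \<le> D}" unfolding Vs_def by blast
    show "finite {xs :: 'a list. set xs \<subseteq> UNIV \<and> length xs \<le> D}" by (rule finite_lists_length_le) simp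
  qed
  have finF: "finite (F v)" for v unfolding F_def by (intro finite_UN_I P_finite finite_imageI) simp
  have cF: "card (F v) \<le> card (P \<theta> n v) * Lmx" for v
  proof -
    have "card (F v) \<le> (\<Sum>w\<in>P \<theta> n v. card ((\<lambda>j. take l (drop j w)) ` {..<Lmx}))"
      unfolding F_def by (rule card_UN_le[OF P_finite])
    also have "\<dots> \<le> (\<Sum>w\<in>P \<theta> n v. Lmx)"
      by (intro sum_mono) (metis card_image_le card_lessThan finite_lessThan)
    finally show ?thesis by simp
  qed
  have cP: "real (card (P \<theta> n v)) \<le> exp (\<mu> * real (l + 2*Lmx))" if "v \<in> Vs" for v
  proof -
    have "ln (real (card (P \<theta> n v))) = sum_list (map (q n) v)" by (rule ln_card_P_word)
    also have "\<dots> \<le> sum_list (map (\<lambda>c. \<mu> * real (ell \<theta> n c)) v)" by (rule sum_list_mono) (rule mu(2))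
    also have "\<dots> = \<mu> * real (sum_list (map (ell \<theta> n) v))" by (induction v) (simp_all add: algebra_simps)
    also have "\<dots> \<le> \<mu> * real (l + 2*Lmx)" using that mu(1) unfolding Vs_def
      by (intro mult_left_mono) simp_all
    finally have "ln (real (card (P \<theta> n v))) \<le> \<mu> * real (l + 2*Lmx)" .
    then have "exp (ln (real (card (P \<theta> n v)))) \<le> exp (\<mu> * real (l + 2*Lmx))" by simp
    then show ?thesis using card_P_pos[of n v] by simp
  qed
  have cV: "card Vs \<le> (D + 1) * CARD('a) ^ D"
  proof -
    have "card Vs \<le> card {xs :: 'a list. set xs \<subseteq> UNIV \<and> length xs \<le> D}"
      by (rule card_mono) (use finite_lists_length_le[of "UNIV :: 'a set" D] in \<open>simp_all add: Vs_def subset_iff\<close>)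
    also have "\<dots> = (\<Sum>i\<le>D. CARD('a) ^ i)" by (rule card_lists_length_le) simp
    also have "\<dots> \<le> (\<Sum>i\<le>D. CARD('a) ^ D)"
      by (intro sum_mono power_increasing) simp_all
    also have "\<dots> = (D + 1) * CARD('a) ^ D" by simp
    finally show ?thesis .
  qed
  have "Nl l \<le> card (\<Union>v\<in>Vs. F v)"
    unfolding Nl_def by (rule card_mono[OF _ sub]) (intro finite_UN_I finVs finF)
  also have "\<dots> \<le> (\<Sum>v\<in>Vs. card (F v))" by (rule card_UN_le[OF finVs])
  also have "\<dots> \<le> (\<Sum>v\<in>Vs. card (P \<theta> n v) * Lmx)" by (intro sum_mono cF)
  finally have "real (Nl l) \<le> real (\<Sum>v\<in>Vs. card (P \<theta> n v) * Lmx)" by linarith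
  also have "\<dots> = (\<Sum>v\<in>Vs. real (card (P \<theta> n v)) * real Lmx)" by simp
  also have "\<dots> \<le> (\<Sum>v\<in>Vs. exp (\<mu> * real (l + 2*Lmx)) * real Lmx)"
    by (intro sum_mono mult_right_mono cP) simp_all
  also have "\<dots> = real (card Vs) * (exp (\<mu> * real (l + 2*Lmx)) * real Lmx)" by simp
  also have "\<dots> \<le> real ((D + 1) * CARD('a) ^ D) * (exp (\<mu> * real (l + 2*Lmx)) * real Lmx)"
  proof (rule mult_right_mono)
    show "real (card Vs) \<le> real ((D + 1) * CARD('a) ^ D)" using cV by (simp only: of_nat_le_iff)
  qed simp
  finally show ?thesis by (simp add: D_def algebra_simps)
qed

end


lemma aux_lim:
  fixes c d A b :: real
  assumes "c \<ge> 0"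
  shows "((\<lambda>k. (ln (real k + c) + (real k + d) * A + b) / real k) \<longlongrightarrow> A) sequentially"
  using assms by real_asymp

context RSP begin

lemma ell_ge1: "ell \<theta> n c \<ge> 1"
  using Lm_ge1[of n c] ell_eq[of n c] by (metis of_nat_1 of_nat_le_iff)

lemma upper_N:
  assumes l: "lam > 1" and e: "S < e"
  shows "eventually (\<lambda>k. ln (real (Nl k)) / real k < e) sequentially"
proof -
  let ?K = "ln (real CARD('a))"
  define \<epsilon> where "\<epsilon> = e - S"
  have \<epsilon>: "\<epsilon> > 0" using e by (simp add: \<epsilon>_def)
  define \<mu> where "\<mu> = S + \<epsilon> / 3"
  have mu0: "\<mu> \<ge> 0" using S_nn \<epsilon> by (simp add: \<mu>_def)
  define B where "B = max 1 (3 * ?K / \<epsilon>)"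
  have B1: "B \<ge> 1" by (simp add: B_def)
  have ev1: "eventually (\<lambda>n. \<forall>c. r n c < \<mu>) sequentially"
  proof (rule eventually_all_finite)
    fix c show "eventually (\<lambda>n. r n c < \<mu>) sequentially"
      by (rule order_tendstoD(2)[OF r_lim[OF l]]) (use \<epsilon> in \<open>simp add: \<mu>_def\<close>)
  qed
  have ev2: "eventually (\<lambda>n. \<forall>c. B \<le> Lm n c) sequentially"
  proof (rule eventually_all_finite)
    fix c show "eventually (\<lambda>n. B \<le> Lm n c) sequentially"
      using Lm_at_top[OF l, of c] unfolding filterlim_at_top by blast
  qed
  obtain n where n: "\<And>c. r n c < \<mu>" "\<And>c. B \<le> Lm n c"
    using eventually_conj[OF ev1 ev2] unfolding eventually_sequentially by blast
  define Lmx where "Lmx = Max (range (ell \<theta> n))"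
  define Lmin where "Lmin = Min (range (ell \<theta> n))"
  have Lmx: "ell \<theta> n c \<le> Lmx" for c unfolding Lmx_def by simp
  have Lmin: "Lmin \<le> ell \<theta> n c" for c unfolding Lmin_def by simp
  have "Lmin \<in> range (ell \<theta> n)" unfolding Lmin_def by (rule Min_in) auto
  then obtain c0 where c0: "Lmin = ell \<theta> n c0" by blast
  have Lmin1: "Lmin \<ge> 1" using c0 ell_ge1 by simp
  have LminB: "real Lmin \<ge> B" using c0 n(2)[of c0] ell_eq by simp
  have Lmx1: "Lmx \<ge> 1" using Lmx[of c0] Lmin1 c0 by simp
  have mu: "q n c \<le> \<mu> * real (ell \<theta> n c)" for c
    using n(1)[of c] Lm_pos[of n c] by (simp add: r_def ell_eq divide_less_eq less_imp_le)
  have KB: "?K / real Lmin \<le> \<epsilon> / 3"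
  proof -
    have "3 * ?K / \<epsilon> \<le> real Lmin" using LminB by (simp add: B_def)
    then have "3 * ?K \<le> real Lmin * \<epsilon>" using \<epsilon> by (simp add: divide_le_eq)
    then show ?thesis using Lmin1 by (simp add: divide_le_eq field_simps)
  qed
  define A where "A = ?K / real Lmin + \<mu>"
  define g where "g k = (ln (real k + real (2*Lmx+1)) + (real k + real (2*Lmx)) * A + ln (real Lmx)) / real k" for k
  have glim: "g \<longlonglongrightarrow> A" unfolding g_def by (rule aux_lim) simp
  have bound: "ln (real (Nl k)) / real k \<le> g k" if k: "Lmx < k" for k
  proof -
    define D where "D = (k + 2*Lmx) div Lmin"
    have cc: "real (Nl k) \<le> real (D + 1) * real CARD('a) ^ D * exp (\<mu> * real (k + 2*Lmx)) * real Lmx"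
      unfolding D_def by (rule cover_count[OF Lmx Lmin Lmin1 k mu0 mu])
    have pos: "real (D + 1) > 0" "real CARD('a) ^ D > 0" "real Lmx > 0" using Lmx1 by simp_all
    have "ln (real (Nl k)) \<le> ln (real (D + 1) * real CARD('a) ^ D * exp (\<mu> * real (k + 2*Lmx)) * real Lmx)"
      using cc Nl_pos[OF l, of k] by simp
    also have "\<dots> = ln (real (D + 1)) + real D * ?K + \<mu> * real (k + 2*Lmx) + ln (real Lmx)"
      using pos by (simp add: ln_mult ln_realpow)
    also have "ln (real (D + 1)) \<le> ln (real k + real (2*Lmx+1))"
    proof -
      have "D \<le> k + 2 * Lmx" unfolding D_def by simp
      then show ?thesis by simp
    qed
    also have "real D * ?K \<le> (real k + real (2*Lmx)) * (?K / real Lmin)"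
    proof -
      have "D * Lmin \<le> k + 2*Lmx" unfolding D_def by simp
      then have "real D * real Lmin \<le> real k + real (2*Lmx)" by (metis of_nat_add of_nat_le_iff of_nat_mult)
      then have "real D \<le> (real k + real (2*Lmx)) / real Lmin" using Lmin1 by (simp add: le_divide_eq)
      then have "real D * ?K \<le> ((real k + real (2*Lmx)) / real Lmin) * ?K" by (rule mult_right_mono) simp
      then show ?thesis by simp
    qed
    finally have "ln (real (Nl k)) \<le> ln (real k + real (2*Lmx+1)) + (real k + real (2*Lmx)) * A + ln (real Lmx)"
      by (simp add: A_def algebra_simps)
    then show ?thesis unfolding g_def using k by (intro divide_right_mono) simp_all
  qed
  have "eventually (\<lambda>k. g k < A + \<epsilon> / 3) sequentially"
    by (rule order_tendstoD(2)[OF glim]) (use \<epsilon> in simp)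
  moreover have "eventually (\<lambda>k. Lmx < k) sequentially" by (rule eventually_gt_at_top)
  ultimately show ?thesis
  proof eventually_elim
    case (elim k)
    have "ln (real (Nl k)) / real k \<le> g k" by (rule bound[OF elim(2)])
    also have "\<dots> < A + \<epsilon> / 3" by (rule elim(1))
    also have "\<dots> = ln (real CARD('a)) / real Lmin + (S + 2 * \<epsilon> / 3)" by (simp add: A_def \<mu>_def)
    also have "\<dots> \<le> \<epsilon> / 3 + (S + 2 * \<epsilon> / 3)" using KB by (rule add_right_mono)
    also have "\<dots> = e" by (simp add: \<epsilon>_def field_simps)
    finally show ?case .
  qed
qed

lemma N_lim: assumes l: "lam > 1" shows "(\<lambda>k. ln (real (Nl k)) / real k) \<longlonglongrightarrow> S"
proof (rule order_tendstoI)
  fix e assume "e < S"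
  then show "eventually (\<lambda>k. e < ln (real (Nl k)) / real k) sequentially"
    unfolding eventually_sequentially using lower_N[OF l] by (meson less_le_trans)
next
  fix e assume "S < e"
  then show "eventually (\<lambda>k. ln (real (Nl k)) / real k < e) sequentially" by (rule upper_N[OF l])
qed

lemma top_S: "lam > 1 \<Longrightarrow> top_entropy \<theta> = S"
  unfolding top_entropy_def using N_lim by (simp add: Nl_def limI)

end


context RSP begin

lemma P_one: "P \<theta> 1 [c] = \<theta> c"
proof -
  have "P \<theta> 1 [c] = subst_set \<theta> {[c]}" by (simp add: P_def)
  also have "\<dots> = subst_word \<theta> [c]" by (simp add: subst_set_def)
  also have "\<dots> = \<theta> c"
  proof (rule set_eqI)
    fix z show "z \<in> subst_word \<theta> [c] \<longleftrightarrow> z \<in> \<theta> c" unfolding subst_word_Cons_iff by simp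
  qed
  finally show ?thesis .
qed

context
  assumes deg: "\<not> lam > 1"
begin

lemma lam1: "lam = 1" using deg lam_ge1 by simp

lemma deg_Lm1: "Lm 1 c = 1"
proof -
  have "(\<Sum>c\<in>UNIV. (Lm 1 c - 1) * R c) = (\<Sum>c\<in>UNIV. Lm 1 c * R c) - (\<Sum>c\<in>UNIV. R c)"
    by (simp add: algebra_simps sum_subtractf)
  also have "\<dots> = 0" using LmR[of 1] R_sum lam1 by simp
  finally have "\<forall>c\<in>UNIV. (Lm 1 c - 1) * R c = 0"
    by (subst sum_nonneg_eq_0_iff[symmetric]) (auto intro!: mult_nonneg_nonneg simp: Lm_ge1 R_nn)
  then have "(Lm 1 c - 1) * R c = 0" by blast
  then show ?thesis using R_ne0[of c] by simp
qed

lemma deg_card: "card (\<theta> c) = 1"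
proof -
  have len: "length u = 1" if "u \<in> \<theta> c" for u
    using length_P[of u 1 c] that deg_Lm1[of c] P_one[of c] by simp
  obtain u0 where u0: "u0 \<in> \<theta> c" using th_ne by blast
  then obtain a where a: "u0 = [a]" using len[OF u0] by (metis length_0_conv length_Suc_conv One_nat_def)
  have "u = u0" if u: "u \<in> \<theta> c" for u
  proof -
    obtain b where b: "u = [b]" using len[OF u] by (metis length_0_conv length_Suc_conv One_nat_def)
    have "count_list u a = count_list u0 a" using sc u u0 unfolding semi_compatible_def by blast
    then show ?thesis using a b by (simp split: if_splits)
  qed
  then have "\<theta> c = {u0}" using u0 by blast
  then show ?thesis by simp
qed

lemma deg_q: "q n c = 0"
proof (induction n arbitrary: c)
  case 0 then show ?case by (simp add: q_0)
next
  case (Suc n)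
  have "q 1 c = ln (real (card (P \<theta> 1 [c])))" by (rule q_eq)
  also have "\<dots> = ln (real (card (\<theta> c)))" by (simp only: P_one)
  also have "\<dots> = 0" by (simp add: deg_card)
  finally have q1: "q 1 c = 0" .
  have "q (n + 1) c \<le> q 1 c + (\<Sum>b\<in>UNIV. mat_pow M 1 b c * q n b)" by (rule q_add_upper)
  then have "q (Suc n) c \<le> 0" using q1 Suc.IH by simp
  then show ?case using q_nonneg[of "Suc n" c] by simp
qed

lemma deg_Lm: "Lm n c = 1"
proof (induction n arbitrary: c)
  case 0 then show ?case by (simp add: Lm_0)
next
  case (Suc n)
  have "Lm (n + 1) c = (\<Sum>b\<in>UNIV. mat_pow M 1 b c * Lm n b)" by (rule Lm_add)
  also have "\<dots> = Lm 1 c" using Suc.IH by (simp add: Lm_def)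
  finally show ?case using deg_Lm1 by simp
qed

lemma deg_lang: "u \<in> language \<theta> \<Longrightarrow> length u \<le> 1"
proof -
  assume "u \<in> language \<theta>"
  then obtain m a w p s where w: "w \<in> P \<theta> m [a]" "w = p @ u @ s"
    unfolding language_def subst_pow_P by blast
  have "real (length w) = 1" using length_P[OF w(1)] deg_Lm by simp
  then show ?thesis using w(2) by simp
qed

lemma deg_top: "top_entropy \<theta> = 0"
proof -
  have "eventually (\<lambda>k. ln (real (card (language_len \<theta> k))) / real k = 0) sequentially"
    unfolding eventually_sequentially
  proof (intro exI allI impI)
    fix k :: nat assume "2 \<le> k"
    then have "language_len \<theta> k = {}" using deg_lang unfolding language_len_def by fastforce
    then show "ln (real (card (language_len \<theta> k))) / real k = 0" by simp
  qed
  then have "(\<lambda>k. ln (real (card (language_len \<theta> k))) / real k) \<longlonglongrightarrow> 0" by (rule tendsto_eventually)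
  then show ?thesis unfolding top_entropy_def by (rule limI)
qed

lemma deg_x: "x n = 0" by (simp add: x_def qR_def deg_q)

lemma deg_S: "S = 0" unfolding S_def by (simp add: deg_x)

end

lemma core: "top_entropy \<theta> = S \<and> (\<forall>a. (\<lambda>n. r n a) \<longlonglongrightarrow> S) \<and> (\<forall>m\<ge>1. S \<le> qR m / (lam ^ m - 1))"
proof (cases "lam > 1")
  case True
  then show ?thesis using top_S r_lim S_upper by blast
next
  case False
  have "r n a = 0" for n a by (simp add: r_def deg_q[OF False])
  moreover have "qR m = 0" for m by (simp add: qR_def deg_q[OF False])
  ultimately show ?thesis using deg_top[OF False] deg_S[OF False] by simp
qed

end


theorem mainTheorem8:
  fixes \<theta> :: "'a::finite \<Rightarrow> 'a list set" and R :: "'a \<Rightarrow> real"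
  assumes "random_subst \<theta>" and "semi_compatible \<theta>" and "primitive_subst \<theta>"
    and "is_right_pf_vector (subst_matrix \<theta>) R"
  defines "lam \<equiv> pf_eigenvalue (subst_matrix \<theta>)"
    and "s \<equiv> top_entropy \<theta>"
    and "qR \<equiv> (\<lambda>m. (\<Sum>j\<in>UNIV. qv \<theta> m j * R j))"
  shows "(\<forall>i. \<forall>m\<ge>1.
            ereal (qR m / lam ^ m) \<le> lower_infl_entropy \<theta> i
          \<and> lower_infl_entropy \<theta> i \<le> upper_infl_entropy \<theta> i
          \<and> upper_infl_entropy \<theta> i \<le> ereal s
          \<and> s \<le> qR m / (lam ^ m - 1))
       \<and> (\<forall>i. (\<lambda>m. qv \<theta> m i / real (ell \<theta> m i)) \<longlonglongrightarrow> s)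
       \<and> (\<lambda>m. qR m / lam ^ m) \<longlonglongrightarrow> s
       \<and> s = (SUP m\<in>{1..}. qR m / lam ^ m)"
proof -
  interpret X: RSP \<theta> R
    using assms(1-4) by (simp add: RSP_def RS_def RSP_axioms_def)
  have core: "top_entropy \<theta> = X.S" "\<And>a. (\<lambda>n. X.r n a) \<longlonglongrightarrow> X.S"
    "\<And>m. m \<ge> 1 \<Longrightarrow> X.S \<le> X.qR m / (pf_eigenvalue (subst_matrix \<theta>) ^ m - 1)"
    using X.core by blast+
  have s_eq: "s = X.S" using core(1) by (simp add: assms(6))
  have qR_eq: "qR m = X.qR m" for m by (simp add: assms(7) X.qR_def X.q_def)
  have x_eq: "qR m / lam ^ m = X.x m" for m by (simp add: qR_eq X.x_def assms(5))
  have r_eq: "qv \<theta> m i / real (ell \<theta> m i) = X.r m i" for m i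
    by (simp add: X.r_def X.q_def X.ell_eq)
  have rlim: "(\<lambda>m. qv \<theta> m i / real (ell \<theta> m i)) \<longlonglongrightarrow> s" for i
    unfolding r_eq s_eq by (rule core(2))
  have erlim: "(\<lambda>m. ereal (qv \<theta> m i / real (ell \<theta> m i))) \<longlonglongrightarrow> ereal s" for i
    by (rule tendsto_ereal[OF rlim])
  have low: "lower_infl_entropy \<theta> i = ereal s" for i
    unfolding lower_infl_entropy_def by (rule lim_imp_Liminf[OF _ erlim]) simp
  have up: "upper_infl_entropy \<theta> i = ereal s" for i
    unfolding upper_infl_entropy_def by (rule lim_imp_Limsup[OF _ erlim]) simp
  have P1: "\<forall>i. \<forall>m\<ge>1.
            ereal (qR m / lam ^ m) \<le> lower_infl_entropy \<theta> i
          \<and> lower_infl_entropy \<theta> i \<le> upper_infl_entropy \<theta> i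
          \<and> upper_infl_entropy \<theta> i \<le> ereal s
          \<and> s \<le> qR m / (lam ^ m - 1)"
  proof (intro allI impI conjI)
    fix i and m :: nat assume m: "m \<ge> 1"
    show "ereal (qR m / lam ^ m) \<le> lower_infl_entropy \<theta> i"
      unfolding low x_eq s_eq using X.x_le_S by simp
    show "lower_infl_entropy \<theta> i \<le> upper_infl_entropy \<theta> i" by (simp add: low up)
    show "upper_infl_entropy \<theta> i \<le> ereal s" by (simp add: up)
    show "s \<le> qR m / (lam ^ m - 1)" using core(3)[OF m] by (simp add: s_eq qR_eq assms(5))
  qed
  have P3: "(\<lambda>m. qR m / lam ^ m) \<longlonglongrightarrow> s" unfolding x_eq s_eq by (rule X.x_lim)
  have P4: "s = (SUP m\<in>{1..}. qR m / lam ^ m)"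
  proof -
    have bdd: "bdd_above (X.x ` {1..})" using X.x_bdd by (meson bdd_above_mono image_mono subset_UNIV)
    have "(SUP m\<in>{1..}. X.x m) \<le> X.S" by (rule cSUP_least) (auto intro: X.x_le_S)
    moreover have "X.S \<le> (SUP m\<in>{1..}. X.x m)"
      unfolding X.S_def
    proof (rule cSUP_least)
      fix n
      have "X.x n \<le> X.x (n + 1)" by (rule X.x_mono)
      also have "\<dots> \<le> (SUP m\<in>{1..}. X.x m)" by (rule cSUP_upper[OF _ bdd]) simp
      finally show "X.x n \<le> (SUP m\<in>{1..}. X.x m)" .
    qed simp
    ultimately show ?thesis unfolding x_eq s_eq by simp
  qed
  show ?thesis using P1 rlim P3 P4 by blast
qed


end
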